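(* Let $n$ and $k$ be positive integers with $k\le n$, and let $m$ be a nonnegative integer. Consider an airplane with $n$ seats numbered $1,\dots,n$ and $n$ passengers numbered $1,\dots,n$, passenger $i$ being assigned seat $i$. Passengers board one at a time in the order $1,2,\dots,n$. Passengers $1,\dots,k$ are absent-minded: when it is such a passenger's turn, he chooses a seat uniformly at random among the currently unoccupied seats. Each passenger $i>k$ sits in seat $i$ if it is unoccupied, and otherwise chooses a seat uniformly at random among the currently unoccupied seats. Call a passenger misseated if he does not end up in his assigned seat. Then the probability $P_{n,k}(m)$ that exactly $m$ passengers are misseated is \[ P_{n,k}(m)=\frac{1}{n!}\sum_{s=0}^{k}\binom{k}{s}\sum_{t=0}^{s}(t!)^2\left\{{m-s \atop t}\right\}\left[{n-k+1 \atop m-s+1}\right]\sum_{r=t}^{s}\binom{s}{r}L(r,t)\,d_{s-r}. \]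
   Context: Notation: $\left[{i \atop j}\right]$ is the unsigned Stirling number of the first kind (number of permutations of $i$ elements with exactly $j$ disjoint cycles); $\left\{{i \atop j}\right\}$ is the Stirling number of the second kind (number of partitions of a set of $i$ labeled objects into $j$ nonempty unlabeled blocks); $L(i,j)$ is the Lah number (number of ways to partition a set of $i$ elements into $j$ nonempty linearly ordered subsets, with $L(0,0)=1$); $d_i$ is the number of derangements (fixed-point-free permutations) of an $i$-element set, with $d_0=1$. Conventions for positive integers $p,q$: $\left\{{-p \atop q}\right\}=0$, $\left\{{-p \atop 0}\right\}=0$, $\left\{{0 \atop q}\right\}=0$, $\left\{{0 \atop 0}\right\}=1$, $\left[{p \atop 0}\right]=0$, $\left[{p \atop -q}\right]=0$. *)

theory Defs
  imports "HOL-Probability.Probability" "HOL-Combinatorics.Stirling" "HOL-Combinatorics.Permutations"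
begin

definition stirling2_int :: "int \<Rightarrow> int \<Rightarrow> nat" where
  "stirling2_int a b = (if a < 0 \<or> b < 0 then 0 else Stirling (nat a) (nat b))"

definition stirling1_int :: "int \<Rightarrow> int \<Rightarrow> nat" where
  "stirling1_int a b = (if a < 0 \<or> b < 0 then 0 else stirling (nat a) (nat b))"

text \<open>Lah number: partitions of {0..<i} into j nonempty linearly ordered blocks
  (each block a nonempty list without repetitions).\<close>
definition lah :: "nat \<Rightarrow> nat \<Rightarrow> nat" where
  "lah i j = card {P :: nat list set.
      (\<forall>xs\<in>P. xs \<noteq> [] \<and> distinct xs) \<and>
      (\<forall>xs\<in>P. \<forall>ys\<in>P. xs \<noteq> ys \<longrightarrow> set xs \<inter> set ys = {}) \<and>
      \<Union>(set ` P) = {0..<i} \<and> card P = j}"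

definition derangements_num :: "nat \<Rightarrow> nat" where
  "derangements_num i = card {p. p permutes {0..<i} \<and> (\<forall>x\<in>{0..<i}. p x \<noteq> x)}"

text \<open>The boarding process: after i passengers have boarded, the state is the list of
  seats taken by passengers 1..i (passenger j sits in seat xs ! (j-1)).\<close>
primrec seating :: "nat \<Rightarrow> nat \<Rightarrow> nat \<Rightarrow> nat list pmf" where
  "seating n k 0 = return_pmf []"
| "seating n k (Suc i) = do {
      xs \<leftarrow> seating n k i;
      s \<leftarrow> (if Suc i \<le> k \<or> Suc i \<in> set xs
             then pmf_of_set ({1..n} - set xs)
             else return_pmf (Suc i));
      return_pmf (xs @ [s])
    }"

definition misseated :: "nat \<Rightarrow> nat list \<Rightarrow> nat" where
  "misseated n xs = card {i \<in> {1..n}. xs ! (i - 1) \<noteq> i}"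

end

theory Submission
  imports Defs
begin


definition Cset :: "nat set \<Rightarrow> nat set \<Rightarrow> (nat \<Rightarrow> nat) set" where
  "Cset A D = {\<tau>. \<tau> permutes (A \<union> D) \<and> (\<forall>z\<in>A \<union> D. \<tau> z \<noteq> z) \<and> (\<forall>z\<in>A \<union> D. \<tau> z \<in> D \<longrightarrow> z < \<tau> z)}"

lemma finite_Cset: "finite A \<Longrightarrow> finite D \<Longrightarrow> finite (Cset A D)"
  unfolding Cset_def by (rule finite_subset[OF _ finite_permutations[of "A \<union> D"]]) auto

lemma permutes_in: "\<tau> permutes S \<Longrightarrow> z \<in> S \<Longrightarrow> \<tau> z \<in> S"
  by (simp add: permutes_in_image)

lemma Cset_step:
  assumes fA: "finite A" and fD: "finite D" and disj: "A \<inter> D = {}" and dn: "d \<notin> A \<union> D"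
    and dl: "\<forall>z\<in>A \<union> D. z < d"
  shows "card (Cset A (insert d D)) = card A * card (Cset A D) + (\<Sum>y\<in>A. card (Cset (A - {y}) D))"
proof -
  let ?C = "Cset A (insert d D)"
  define P1 where "P1 = {\<tau>\<in>?C. \<tau> (\<tau> d) \<noteq> d}"
  define P2 where "P2 = {\<tau>\<in>?C. \<tau> (\<tau> d) = d}"
  define S1 where "S1 = Sigma (Cset A D) (\<lambda>\<tau>'. {x\<in>A \<union> D. \<tau>' x \<in> A})"
  define S2 where "S2 = Sigma A (\<lambda>y. Cset (A - {y}) D)"
  define g1 where "g1 = (\<lambda>(\<tau>'::nat\<Rightarrow>nat, x). \<tau>' \<circ> Transposition.transpose x d)"
  define g2 where "g2 = (\<lambda>(y, \<tau>''::nat\<Rightarrow>nat). Transposition.transpose y d \<circ> \<tau>'')"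
  have fC: "finite ?C" by (rule finite_Cset) (use fA fD in auto)
  have CU: "?C = P1 \<union> P2" and CI: "P1 \<inter> P2 = {}" unfolding P1_def P2_def by auto
  have dnA: "d \<notin> A" and dnD: "d \<notin> D" using dn by auto
  have inj1: "inj_on g1 S1"
  proof (rule inj_onI)
    fix p q assume p: "p \<in> S1" and q: "q \<in> S1" and e: "g1 p = g1 q"
    obtain t1 x1 where p': "p = (t1, x1)" by (cases p)
    obtain t2 x2 where q': "q = (t2, x2)" by (cases q)
    have t1: "t1 permutes A \<union> D" and x1: "x1 \<in> A \<union> D" using p p' unfolding S1_def Cset_def by auto
    have t2: "t2 permutes A \<union> D" and x2: "x2 \<in> A \<union> D" using q q' unfolding S1_def Cset_def by auto
    have e': "t1 \<circ> Transposition.transpose x1 d = t2 \<circ> Transposition.transpose x2 d"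
      using e p' q' unfolding g1_def by simp
    have "x1 = x2"
    proof (rule ccontr)
      assume ne: "x1 \<noteq> x2"
      have "(t1 \<circ> Transposition.transpose x1 d) x1 = t1 d" by simp
      also have "\<dots> = d" using t1 dn by (simp add: permutes_not_in)
      finally have "(t2 \<circ> Transposition.transpose x2 d) x1 = d" using e' by simp
      moreover have "x1 \<noteq> d" using x1 dn by auto
      ultimately have "t2 x1 = d" using ne by (simp add: Transposition.transpose_def)
      moreover have "t2 x1 \<in> A \<union> D" using permutes_in[OF t2 x1] .
      ultimately show False using dn by simp
    qed
    have "t1 (Transposition.transpose x1 d z) = t2 (Transposition.transpose x1 d z)" for z
      using fun_cong[OF e', of z] \<open>x1 = x2\<close> by simp
    then have "t1 z = t2 z" for z by (metis transpose_involutory)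
    then have "t1 = t2" by auto
    then show "p = q" using p' q' \<open>x1 = x2\<close> by simp
  qed
  have img1: "g1 ` S1 = P1"
  proof
    show "g1 ` S1 \<subseteq> P1"
    proof
      fix \<tau> assume "\<tau> \<in> g1 ` S1"
      then obtain t x where tx: "(t, x) \<in> S1" and tau: "\<tau> = t \<circ> Transposition.transpose x d"
        unfolding g1_def by auto
      have t: "t permutes A \<union> D" and der: "\<forall>z\<in>A \<union> D. t z \<noteq> z"
        and cond: "\<forall>z\<in>A \<union> D. t z \<in> D \<longrightarrow> z < t z" and x: "x \<in> A \<union> D" and tx': "t x \<in> A"
        using tx unfolding S1_def Cset_def by auto
      have xd: "x \<noteq> d" using x dn by auto
      have td: "t d = d" using t dn by (simp add: permutes_not_in)
      have tapp: "\<tau> z = (if z = x then d else if z = d then t x else t z)" for z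
        using td unfolding tau by (auto simp: Transposition.transpose_def)
      have perm: "\<tau> permutes A \<union> insert d D"
        unfolding tau
        by (rule permutes_compose[OF permutes_swap_id permutes_subset[OF t]]) (use x in auto)
      have der': "\<forall>z\<in>A \<union> insert d D. \<tau> z \<noteq> z"
        using der tapp xd tx' dnA by auto
      have cond': "\<forall>z\<in>A \<union> insert d D. \<tau> z \<in> insert d D \<longrightarrow> z < \<tau> z"
      proof (intro ballI impI)
        fix z assume z: "z \<in> A \<union> insert d D" and tz: "\<tau> z \<in> insert d D"
        show "z < \<tau> z"
        proof (cases "z = x")
          case True then show ?thesis using tapp dl x by auto
        next
          case False
          show ?thesis
          proof (cases "z = d")
            case True then have "\<tau> z = t x" using tapp xd by auto
            then show ?thesis using tz tx' disj dnA by auto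
          next
            case False
            then have zz: "z \<in> A \<union> D" and tzz: "\<tau> z = t z" using z tapp \<open>z \<noteq> x\<close> by auto
            have "t z \<in> A \<union> D" using permutes_in[OF t zz] .
            then have "t z \<in> D" using tz tzz dn by auto
            then show ?thesis using cond zz tzz by auto
          qed
        qed
      qed
      have "\<tau> (\<tau> d) \<noteq> d"
      proof -
        have "\<tau> d = t x" using tapp xd by simp
        moreover have "t x \<noteq> x" using der x by auto
        moreover have "t x \<noteq> d" using tx' dnA by auto
        moreover have "t (t x) \<in> A \<union> D" using permutes_in[OF t] tx' by auto
        ultimately show ?thesis using tapp dn by auto
      qed
      then show "\<tau> \<in> P1" unfolding P1_def Cset_def using perm der' cond' by auto
    qed
  next
    show "P1 \<subseteq> g1 ` S1"
    proof
      fix \<tau> assume tP: "\<tau> \<in> P1"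
      have perm: "\<tau> permutes A \<union> insert d D" and der: "\<forall>z\<in>A \<union> insert d D. \<tau> z \<noteq> z"
        and cond: "\<forall>z\<in>A \<union> insert d D. \<tau> z \<in> insert d D \<longrightarrow> z < \<tau> z"
        and nn: "\<tau> (\<tau> d) \<noteq> d"
        using tP unfolding P1_def Cset_def by auto
      define x where "x = inv \<tau> d"
      have txd: "\<tau> x = d" unfolding x_def using perm by (meson permutes_inverses(1))
      have xin: "x \<in> A \<union> insert d D"
        using perm txd by (metis insertI1 permutes_in UnI2 permutes_not_in)
      have xd: "x \<noteq> d" using txd der by auto
      have xAD: "x \<in> A \<union> D" using xin xd by auto
      define y where "y = \<tau> d"
      have yin: "y \<in> A \<union> insert d D" unfolding y_def using permutes_in[OF perm] by auto
      have yd: "y \<noteq> d" unfolding y_def using der by auto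
      have yA: "y \<in> A"
      proof (rule ccontr)
        assume "y \<notin> A"
        then have "y \<in> insert d D" using yin by auto
        then have "d < y" using cond unfolding y_def by auto
        moreover have "y < d" using dl yin yd \<open>y \<notin> A\<close> by auto
        ultimately show False by simp
      qed
      define t where "t = \<tau> \<circ> Transposition.transpose x d"
      have tapp: "t z = (if z = x then y else if z = d then d else \<tau> z)" for z
        unfolding t_def y_def using txd by (auto simp: Transposition.transpose_def)
      have tback: "\<tau> = t \<circ> Transposition.transpose x d"
        unfolding t_def by (simp add: o_assoc[symmetric])
      have tperm0: "t permutes A \<union> insert d D"
        unfolding t_def by (rule permutes_compose[OF permutes_swap_id perm]) (use xin in auto)
      have tperm: "t permutes A \<union> D"
        by (rule permutes_superset[OF tperm0]) (use tapp xd in auto)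
      have xy: "x \<noteq> y"
      proof
        assume "x = y"
        then have "\<tau> (\<tau> d) = d" using txd unfolding y_def by simp
        then show False using nn by simp
      qed
      have tder: "\<forall>z\<in>A \<union> D. t z \<noteq> z" using tapp der xy dn by auto
      have tcond: "\<forall>z\<in>A \<union> D. t z \<in> D \<longrightarrow> z < t z"
        using tapp cond yA disj dn by auto
      have "t \<in> Cset A D" unfolding Cset_def using tperm tder tcond by auto
      moreover have "t x \<in> A" using tapp yA by simp
      ultimately have "(t, x) \<in> S1" unfolding S1_def using xAD by auto
      then show "\<tau> \<in> g1 ` S1" unfolding g1_def using tback by force
    qed
  qed
  have cardS1: "card S1 = card A * card (Cset A D)"
  proof -
    have "card {x\<in>A \<union> D. t x \<in> A} = card A" if t: "t \<in> Cset A D" for t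
    proof -
      have tp: "t permutes A \<union> D" using t unfolding Cset_def by auto
      have "inj_on t {x\<in>A \<union> D. t x \<in> A}"
        by (rule permutes_inj_on[OF tp])
      moreover have "t ` {x\<in>A \<union> D. t x \<in> A} = A"
      proof
        show "t ` {x\<in>A \<union> D. t x \<in> A} \<subseteq> A" by auto
        show "A \<subseteq> t ` {x\<in>A \<union> D. t x \<in> A}"
        proof
          fix a assume a: "a \<in> A"
          then have "a \<in> t ` (A \<union> D)" using permutes_image[OF tp] by auto
          then obtain x where "x \<in> A \<union> D" "t x = a" by auto
          then show "a \<in> t ` {x\<in>A \<union> D. t x \<in> A}" using a by auto
        qed
      qed
      ultimately show ?thesis by (metis card_image)
    qed
    then show ?thesis unfolding S1_def
      using fA fD finite_Cset[OF fA fD] by (simp add: mult.commute)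
  qed
  have inj2: "inj_on g2 S2"
  proof (rule inj_onI)
    fix p q assume p: "p \<in> S2" and q: "q \<in> S2" and e: "g2 p = g2 q"
    obtain y1 t1 where p': "p = (y1, t1)" by (cases p)
    obtain y2 t2 where q': "q = (y2, t2)" by (cases q)
    have t1: "t1 permutes (A - {y1}) \<union> D" and y1: "y1 \<in> A" using p p' unfolding S2_def Cset_def by auto
    have t2: "t2 permutes (A - {y2}) \<union> D" and y2: "y2 \<in> A" using q q' unfolding S2_def Cset_def by auto
    have e': "Transposition.transpose y1 d \<circ> t1 = Transposition.transpose y2 d \<circ> t2"
      using e p' q' unfolding g2_def by simp
    have t1d: "t1 d = d" using t1 dn by (simp add: permutes_not_in)
    have t2d: "t2 d = d" using t2 dn by (simp add: permutes_not_in)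
    have "(Transposition.transpose y1 d \<circ> t1) d = y1" using t1d by simp
    moreover have "(Transposition.transpose y2 d \<circ> t2) d = y2" using t2d by simp
    ultimately have "y1 = y2" using e' by simp
    have "Transposition.transpose y1 d (t1 z) = Transposition.transpose y1 d (t2 z)" for z
      using fun_cong[OF e', of z] \<open>y1 = y2\<close> by simp
    then have "t1 z = t2 z" for z by (metis transpose_involutory)
    then have "t1 = t2" by auto
    then show "p = q" using p' q' \<open>y1 = y2\<close> by simp
  qed
  have img2: "g2 ` S2 = P2"
  proof
    show "g2 ` S2 \<subseteq> P2"
    proof
      fix \<tau> assume "\<tau> \<in> g2 ` S2"
      then obtain y t where yt: "(y, t) \<in> S2" and tau: "\<tau> = Transposition.transpose y d \<circ> t"
        unfolding g2_def by auto
      have t: "t permutes (A - {y}) \<union> D" and der: "\<forall>z\<in>(A - {y}) \<union> D. t z \<noteq> z"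
        and cond: "\<forall>z\<in>(A - {y}) \<union> D. t z \<in> D \<longrightarrow> z < t z" and y: "y \<in> A"
        using yt unfolding S2_def Cset_def by auto
      have yd: "y \<noteq> d" using y dn by auto
      have td: "t d = d" using t dn by (simp add: permutes_not_in)
      have ty: "t y = y" by (rule permutes_not_in[OF t]) (use disj y in auto)
      have tin: "z \<in> (A - {y}) \<union> D \<Longrightarrow> t z \<in> (A - {y}) \<union> D" for z using permutes_in[OF t] .
      have tapp: "\<tau> z = (if z = y then d else if z = d then y else t z)" for z
      proof -
        have "t z \<noteq> y \<and> t z \<noteq> d" if zy: "z \<noteq> y" and zd: "z \<noteq> d"
        proof (cases "z \<in> (A - {y}) \<union> D")
          case True
          then have "t z \<in> (A - {y}) \<union> D" by (rule tin)
          then show ?thesis using dn disj y by auto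
        next
          case False
          then have "t z = z" by (rule permutes_not_in[OF t])
          then show ?thesis using zy zd by simp
        qed
        then show ?thesis unfolding tau using td ty by (auto simp: Transposition.transpose_def)
      qed
      have perm: "\<tau> permutes A \<union> insert d D"
        unfolding tau
        by (rule permutes_compose[OF permutes_subset[OF t] permutes_swap_id]) (use y in auto)
      have der': "\<forall>z\<in>A \<union> insert d D. \<tau> z \<noteq> z"
        using der tapp yd by auto
      have cond': "\<forall>z\<in>A \<union> insert d D. \<tau> z \<in> insert d D \<longrightarrow> z < \<tau> z"
      proof (intro ballI impI)
        fix z assume z: "z \<in> A \<union> insert d D" and tz: "\<tau> z \<in> insert d D"
        show "z < \<tau> z"
        proof (cases "z = y")
          case True then show ?thesis using tapp dl y by auto
        next
          case False
          show ?thesis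
          proof (cases "z = d")
            case True then have "\<tau> z = y" using tapp yd by auto
            then show ?thesis using tz y disj dnA yd by auto
          next
            case False
            then have zz: "z \<in> (A - {y}) \<union> D" and tzz: "\<tau> z = t z" using z tapp \<open>z \<noteq> y\<close> by auto
            have "t z \<in> (A - {y}) \<union> D" using tin[OF zz] .
            then have "t z \<in> D" using tz tzz dn by auto
            then show ?thesis using cond zz tzz by auto
          qed
        qed
      qed
      have "\<tau> (\<tau> d) = d" using tapp yd by simp
      then show "\<tau> \<in> P2" unfolding P2_def Cset_def using perm der' cond' by auto
    qed
  next
    show "P2 \<subseteq> g2 ` S2"
    proof
      fix \<tau> assume tP: "\<tau> \<in> P2"
      have perm: "\<tau> permutes A \<union> insert d D" and der: "\<forall>z\<in>A \<union> insert d D. \<tau> z \<noteq> z"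
        and cond: "\<forall>z\<in>A \<union> insert d D. \<tau> z \<in> insert d D \<longrightarrow> z < \<tau> z"
        and nn: "\<tau> (\<tau> d) = d"
        using tP unfolding P2_def Cset_def by auto
      define y where "y = \<tau> d"
      have yin: "y \<in> A \<union> insert d D" unfolding y_def using permutes_in[OF perm] by auto
      have yd: "y \<noteq> d" unfolding y_def using der by auto
      have yA: "y \<in> A"
      proof (rule ccontr)
        assume "y \<notin> A"
        then have "y \<in> insert d D" using yin by auto
        then have "d < y" using cond unfolding y_def by auto
        moreover have "y < d" using dl yin yd \<open>y \<notin> A\<close> by auto
        ultimately show False by simp
      qed
      have tyd: "\<tau> y = d" using nn unfolding y_def .
      have inj: "inj \<tau>" using perm by (simp add: permutes_inj)
      define t where "t = Transposition.transpose y d \<circ> \<tau>"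
      have tapp: "t z = (if z = y then y else if z = d then d else \<tau> z)" for z
      proof -
        have "z \<noteq> y \<Longrightarrow> \<tau> z \<noteq> d" using tyd inj by (metis injD)
        moreover have "z \<noteq> d \<Longrightarrow> \<tau> z \<noteq> y" using inj unfolding y_def by (metis injD)
        ultimately show ?thesis unfolding t_def using tyd y_def by (auto simp: Transposition.transpose_def)
      qed
      have tback: "\<tau> = Transposition.transpose y d \<circ> t"
        unfolding t_def by (simp add: o_assoc)
      have tperm0: "t permutes A \<union> insert d D"
        unfolding t_def by (rule permutes_compose[OF perm permutes_swap_id]) (use yA in auto)
      have tperm: "t permutes (A - {y}) \<union> D"
        by (rule permutes_superset[OF tperm0]) (use tapp in auto)
      have yD: "y \<notin> D" using yA disj by auto
      have tder: "\<forall>z\<in>(A - {y}) \<union> D. t z \<noteq> z" using tapp der dn yD by auto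
      have tcond: "\<forall>z\<in>(A - {y}) \<union> D. t z \<in> D \<longrightarrow> z < t z"
        using tapp cond dn yD by auto
      have "t \<in> Cset (A - {y}) D" unfolding Cset_def using tperm tder tcond by auto
      then have "(y, t) \<in> S2" unfolding S2_def using yA by auto
      then show "\<tau> \<in> g2 ` S2" unfolding g2_def using tback by force
    qed
  qed
  have cardS2: "card S2 = (\<Sum>y\<in>A. card (Cset (A - {y}) D))"
    unfolding S2_def using fA fD finite_Cset by simp
  have "card ?C = card P1 + card P2"
    using CU CI fC by (metis card_Un_disjoint finite_Un)
  also have "card P1 = card S1" using img1 inj1 by (metis card_image)
  also have "card P2 = card S2" using img2 inj2 by (metis card_image)
  finally show ?thesis using cardS1 cardS2 by simp
qed


definition fC :: "nat \<Rightarrow> nat \<Rightarrow> int" where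
  "fC s q = (\<Sum>j\<le>s. (-1)^j * int (s choose j) * fact (s - j) * int (s - j) ^ q)"

lemma fC_rec:
  assumes "s \<ge> 1"
  shows "fC s (Suc q) = int s * (fC s q + fC (s - 1) q)"
proof -
  obtain s' where s: "s = Suc s'" using assms by (cases s) auto
  have "int s * fC s' q = (\<Sum>j\<le>s'. (-1)^j * int (s * (s' choose j)) * fact (s' - j) * int (s' - j) ^ q)"
    unfolding fC_def by (simp add: sum_distrib_left algebra_simps)
  also have "\<dots> = (\<Sum>j\<le>s'. (-1)^j * int (Suc j * (s choose Suc j)) * fact (s - Suc j) * int (s - Suc j) ^ q)"
  proof (rule sum.cong[OF refl])
    fix j assume "j \<in> {..s'}"
    have "s * (s' choose j) = Suc j * (s choose Suc j)"
      unfolding s by (metis Suc_times_binomial_eq mult.commute)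
    then show "(-1)^j * int (s * (s' choose j)) * fact (s' - j) * int (s' - j) ^ q =
      (-1)^j * int (Suc j * (s choose Suc j)) * fact (s - Suc j) * int (s - Suc j) ^ q"
      using s by simp
  qed
  also have "\<dots> = - (\<Sum>j\<le>s. (-1)^j * int j * int (s choose j) * fact (s - j) * int (s - j) ^ q)"
    unfolding s by (subst sum.atMost_Suc_shift) (simp add: sum_negf[symmetric] algebra_simps)
  finally have e1: "int s * fC s' q = - (\<Sum>j\<le>s. (-1)^j * int j * int (s choose j) * fact (s - j) * int (s - j) ^ q)" .
  have e2: "int s * fC s q = (\<Sum>j\<le>s. (-1)^j * int s * int (s choose j) * fact (s - j) * int (s - j) ^ q)"
    unfolding fC_def by (simp add: sum_distrib_left algebra_simps)
  have "fC s (Suc q) = (\<Sum>j\<le>s. (-1)^j * int s * int (s choose j) * fact (s - j) * int (s - j) ^ q)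
       - (\<Sum>j\<le>s. (-1)^j * int j * int (s choose j) * fact (s - j) * int (s - j) ^ q)"
    unfolding fC_def sum_subtractf[symmetric]
  proof (rule sum.cong[OF refl])
    fix j assume "j \<in> {..s}"
    then have "int (s - j) = int s - int j" by simp
    then show "(-1)^j * int (s choose j) * fact (s - j) * int (s - j) ^ Suc q =
      (-1)^j * int s * int (s choose j) * fact (s - j) * int (s - j) ^ q -
      (-1)^j * int j * int (s choose j) * fact (s - j) * int (s - j) ^ q"
      by (simp add: algebra_simps)
  qed
  then show ?thesis using e1 e2 s by (simp add: algebra_simps)
qed

lemma choose_fact_Suc:
  assumes "j \<le> s"
  shows "(Suc s choose j) * fact (Suc s - j) = Suc s * ((s choose j) * fact (s - j))"
proof -
  have a: "fact j * fact (Suc s - j) * (Suc s choose j) = (fact (Suc s) :: nat)"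
    using assms by (intro binomial_fact_lemma) simp
  have b: "fact j * fact (s - j) * (s choose j) = (fact s :: nat)"
    using assms by (intro binomial_fact_lemma)
  have "fact j * ((Suc s choose j) * fact (Suc s - j)) = fact j * (Suc s * ((s choose j) * fact (s - j)))"
    using a b by (simp add: algebra_simps)
  then show ?thesis by (simp add: fact_nonzero)
qed

lemma fC_0_Suc: "fC (Suc s) 0 = int (Suc s) * fC s 0 + (-1) ^ Suc s"
proof -
  have "fC (Suc s) 0 = (\<Sum>j\<le>s. (-1)^j * int ((Suc s choose j) * fact (Suc s - j))) + (-1) ^ Suc s"
    unfolding fC_def by (simp add: algebra_simps)
  also have "(\<Sum>j\<le>s. (-1)^j * int ((Suc s choose j) * fact (Suc s - j))) =
     (\<Sum>j\<le>s. (-1)^j * int (Suc s * ((s choose j) * fact (s - j))))"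
    by (rule sum.cong[OF refl]) (simp only: choose_fact_Suc atMost_iff)
  also have "\<dots> = int (Suc s) * fC s 0"
    unfolding fC_def by (simp add: sum_distrib_left algebra_simps)
  finally show ?thesis .
qed

lemma fC_0_0: "fC 0 0 = 1" by (simp add: fC_def)
lemma fC_0_Suc_q: "fC 0 (Suc q) = 0" by (simp add: fC_def)
lemma fC_1_0: "fC 1 0 = 0" by (simp add: fC_def)

lemma fC_0_rec:
  assumes "s \<ge> 1"
  shows "fC (Suc s) 0 = int s * (fC s 0 + fC (s - 1) 0)"
proof -
  obtain s' where s: "s = Suc s'" using assms by (cases s) auto
  have "fC s 0 = int s * fC s' 0 + (-1) ^ s" unfolding s by (rule fC_0_Suc)
  then show ?thesis unfolding fC_0_Suc s by (simp add: algebra_simps)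
qed


lemma Cset_empty: "Cset {} {} = {id}"
  unfolding Cset_def by (auto simp: permutes_empty)

lemma Cset_card_aux:
  "\<And>A D. card A + card D = N \<Longrightarrow> finite A \<Longrightarrow> finite D \<Longrightarrow> A \<inter> D = {} \<Longrightarrow> (\<forall>a\<in>A. \<forall>x\<in>D. a < x) \<Longrightarrow>
     int (card (Cset A D)) = fC (card A) (card D)"
proof (induction N rule: less_induct)
  case (less N A D)
  note fA = \<open>finite A\<close> and fD = \<open>finite D\<close> and disj = \<open>A \<inter> D = {}\<close> and ord = \<open>\<forall>a\<in>A. \<forall>x\<in>D. a < x\<close>
  show ?case
  proof (cases "D = {}")
    case False
    define d where "d = Max D"
    have dD: "d \<in> D" unfolding d_def using False fD by simp
    define D' where "D' = D - {d}"
    have D: "D = insert d D'" unfolding D'_def using dD by auto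
    have fD': "finite D'" using fD unfolding D'_def by simp
    have dn: "d \<notin> A \<union> D'" using dD disj unfolding D'_def by auto
    have dl: "\<forall>z\<in>A \<union> D'. z < d"
    proof
      fix z assume "z \<in> A \<union> D'"
      then show "z < d"
      proof
        assume "z \<in> A" then show ?thesis using ord dD by auto
      next
        assume z: "z \<in> D'"
        then have "z \<le> d" unfolding d_def D'_def using fD by simp
        moreover have "z \<noteq> d" using z unfolding D'_def by simp
        ultimately show ?thesis by simp
      qed
    qed
    have disj': "A \<inter> D' = {}" using disj unfolding D'_def by auto
    have cD: "card D = Suc (card D')" using D fD' dn by simp
    have step: "card (Cset A D) = card A * card (Cset A D') + (\<Sum>y\<in>A. card (Cset (A - {y}) D'))"
      unfolding D by (rule Cset_step[OF fA fD' disj' dn dl])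
    have IH1: "int (card (Cset A D')) = fC (card A) (card D')"
      by (rule less.IH[of "card A + card D'"]) (use less.prems cD fA fD' disj' ord D'_def in auto)
    have IH2: "int (card (Cset (A - {y}) D')) = fC (card A - 1) (card D')" if y: "y \<in> A" for y
    proof -
      have "int (card (Cset (A - {y}) D')) = fC (card (A - {y})) (card D')"
        by (rule less.IH[of "card (A - {y}) + card D'"])
           (use less.prems cD fA fD' disj' ord D'_def y in \<open>auto simp: card_Diff_singleton\<close>)
      then show ?thesis using y fA by (simp add: card_Diff_singleton)
    qed
    have "int (card (Cset A D)) = int (card A) * fC (card A) (card D') + (\<Sum>y\<in>A. fC (card A - 1) (card D'))"
      using step IH1 IH2 by simp
    also have "\<dots> = int (card A) * (fC (card A) (card D') + fC (card A - 1) (card D'))"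
      by (simp add: algebra_simps)
    also have "\<dots> = fC (card A) (card D)"
    proof (cases "card A = 0")
      case True then show ?thesis using cD by (simp add: fC_0_Suc_q)
    next
      case False then show ?thesis using cD fC_rec[of "card A" "card D'"] by simp
    qed
    finally show ?thesis .
  next
    case True
    note D0 = True
    show ?thesis
    proof (cases "A = {}")
      case True then show ?thesis using D0 by (simp add: Cset_empty fC_0_0)
    next
      case False
      define a where "a = Max A"
      have aA: "a \<in> A" unfolding a_def using False fA by simp
      define A' where "A' = A - {a}"
      have A: "A = insert a A'" unfolding A'_def using aA by auto
      have fA': "finite A'" using fA unfolding A'_def by simp
      have an: "a \<notin> A' \<union> {}" unfolding A'_def by auto
      have al: "\<forall>z\<in>A' \<union> {}. z < a"
      proof
        fix z assume z: "z \<in> A' \<union> {}"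
        then have "z \<le> a" unfolding a_def A'_def using fA by simp
        moreover have "z \<noteq> a" using z unfolding A'_def by simp
        ultimately show "z < a" by simp
      qed
      have cA: "card A = Suc (card A')" using A fA' an by simp
      have eqC: "Cset A {} = Cset A' (insert a {})"
      proof -
        have "A' \<union> insert a {} = A \<union> {}" using A by auto
        moreover have "(\<forall>z\<in>A. \<tau> z \<noteq> z) \<Longrightarrow> (\<forall>z\<in>A. \<tau> z \<in> insert a {} \<longrightarrow> z < \<tau> z)" for \<tau>
          using al A by auto
        ultimately show ?thesis unfolding Cset_def by auto
      qed
      have step: "card (Cset A {}) = card A' * card (Cset A' {}) + (\<Sum>y\<in>A'. card (Cset (A' - {y}) {}))"
        unfolding eqC by (rule Cset_step[OF fA' finite.emptyI _ an al]) simp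
      have IH1: "int (card (Cset A' {})) = fC (card A') 0"
        using less.IH[of "card A'" A' "{}"] less.prems D0 cA fA' by simp
      have IH2: "int (card (Cset (A' - {y}) {})) = fC (card A' - 1) 0" if y: "y \<in> A'" for y
      proof -
        have "int (card (Cset (A' - {y}) {})) = fC (card (A' - {y})) 0"
          using less.IH[of "card (A' - {y})" "A' - {y}" "{}"] less.prems D0 cA fA' y
          by (simp add: card_Diff_singleton)
        then show ?thesis using y fA' by (simp add: card_Diff_singleton)
      qed
      have "int (card (Cset A D)) = int (card A') * fC (card A') 0 + (\<Sum>y\<in>A'. fC (card A' - 1) 0)"
        using step IH1 IH2 D0 by simp
      also have "\<dots> = int (card A') * (fC (card A') 0 + fC (card A' - 1) 0)"
        by (simp add: algebra_simps)
      also have "\<dots> = fC (card A) (card D)"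
      proof (cases "card A' = 0")
        case True then show ?thesis using cA D0 fC_1_0 by simp
      next
        case False then show ?thesis using cA D0 fC_0_rec[of "card A'"] by simp
      qed
      finally show ?thesis .
    qed
  qed
qed

lemma Cset_card:
  assumes "finite A" "finite D" "A \<inter> D = {}" "\<forall>a\<in>A. \<forall>x\<in>D. a < x"
  shows "int (card (Cset A D)) = fC (card A) (card D)"
  using Cset_card_aux assms by blast

lemma derangements_num_fC: "int (derangements_num s) = fC s 0"
proof -
  have "{p. p permutes {0..<s} \<and> (\<forall>x\<in>{0..<s}. p x \<noteq> x)} = Cset {0..<s} {}"
    unfolding Cset_def by auto
  then show ?thesis unfolding derangements_num_def using Cset_card[of "{0..<s}" "{}"] by simp
qed


definition lahS :: "nat set \<Rightarrow> nat \<Rightarrow> nat list set set" where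
  "lahS S j = {P :: nat list set.
      (\<forall>xs\<in>P. xs \<noteq> [] \<and> distinct xs) \<and>
      (\<forall>xs\<in>P. \<forall>ys\<in>P. xs \<noteq> ys \<longrightarrow> set xs \<inter> set ys = {}) \<and>
      \<Union>(set ` P) = S \<and> card P = j}"

definition Oset :: "nat set \<Rightarrow> nat \<Rightarrow> nat list list set" where
  "Oset S j = {ls :: nat list list. length ls = j \<and> distinct ls \<and>
      (\<forall>xs\<in>set ls. xs \<noteq> [] \<and> distinct xs) \<and>
      (\<forall>xs\<in>set ls. \<forall>ys\<in>set ls. xs \<noteq> ys \<longrightarrow> set xs \<inter> set ys = {}) \<and>
      \<Union>(set ` set ls) = S}"

lemma lah_lahS: "lah i j = card (lahS {0..<i} j)"
  unfolding lah_def lahS_def ..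

lemma finite_lahS: "finite S \<Longrightarrow> finite (lahS S j)"
proof -
  assume fS: "finite S"
  have "lahS S j \<subseteq> Pow {xs. set xs \<subseteq> S \<and> distinct xs}"
    unfolding lahS_def by auto
  moreover have "finite {xs. set xs \<subseteq> S \<and> distinct xs}"
    using finite_subset_distinct[OF fS] by simp
  ultimately show ?thesis by (meson finite_Pow_iff finite_subset)
qed

lemma finite_Oset: "finite S \<Longrightarrow> finite (Oset S j)"
proof -
  assume fS: "finite S"
  have fX: "finite {xs. set xs \<subseteq> S \<and> distinct xs}"
    using finite_subset_distinct[OF fS] by simp
  have "Oset S j \<subseteq> {ls. set ls \<subseteq> {xs. set xs \<subseteq> S \<and> distinct xs} \<and> length ls = j}"
    unfolding Oset_def by auto
  moreover have "finite {ls. set ls \<subseteq> {xs. set xs \<subseteq> S \<and> distinct xs} \<and> length ls = j}"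
    by (rule finite_lists_length_eq[OF fX])
  ultimately show ?thesis by (rule finite_subset)
qed

lemma card_perm_lists:
  assumes "finite P"
  shows "card {ls. distinct ls \<and> set ls = P} = fact (card P)"
proof -
  have "{ls. distinct ls \<and> set ls = P} = {xs. length xs = card P \<and> distinct xs \<and> set xs \<subseteq> P}"
  proof
    show "{ls. distinct ls \<and> set ls = P} \<subseteq> {xs. length xs = card P \<and> distinct xs \<and> set xs \<subseteq> P}"
      by (auto simp: distinct_card)
    show "{xs. length xs = card P \<and> distinct xs \<and> set xs \<subseteq> P} \<subseteq> {ls. distinct ls \<and> set ls = P}"
    proof
      fix xs assume xs: "xs \<in> {xs. length xs = card P \<and> distinct xs \<and> set xs \<subseteq> P}"
      then have "set xs = P" using card_subset_eq[OF assms, of "set xs"] by (simp add: distinct_card)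
      then show "xs \<in> {ls. distinct ls \<and> set ls = P}" using xs by simp
    qed
  qed
  also have "card \<dots> = \<Prod>{card P - card P + 1..card P}"
    by (rule card_lists_distinct_length_eq[OF assms]) simp
  also have "\<dots> = fact (card P)" by (simp add: fact_prod)
  finally show ?thesis .
qed

lemma Oset_lahS:
  assumes fS: "finite S"
  shows "card (Oset S j) = fact j * card (lahS S j)"
proof -
  have sub: "set ` Oset S j \<subseteq> lahS S j"
    unfolding Oset_def lahS_def by (auto simp: distinct_card)
  have "card (Oset S j) = (\<Sum>P\<in>lahS S j. card {ls\<in>Oset S j. set ls = P})"
    using card_eq_sum sum.group[OF finite_Oset[OF fS] finite_lahS[OF fS] sub, of "\<lambda>_. 1::nat"]
    by simp
  also have "\<dots> = (\<Sum>P\<in>lahS S j. fact j)"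
  proof (rule sum.cong[OF refl])
    fix P assume P: "P \<in> lahS S j"
    have "{ls\<in>Oset S j. set ls = P} = {ls. distinct ls \<and> set ls = P}"
      using P unfolding Oset_def lahS_def by (auto simp: distinct_card)
    moreover have "finite P"
    proof -
      have "P \<subseteq> {xs. set xs \<subseteq> S \<and> distinct xs}" using P unfolding lahS_def by auto
      then show ?thesis using finite_subset_distinct[OF fS] by (simp add: finite_subset)
    qed
    moreover have "card P = j" using P unfolding lahS_def by auto
    ultimately show "card {ls\<in>Oset S j. set ls = P} = fact j" using card_perm_lists[of P] by metis
  qed
  also have "\<dots> = fact j * card (lahS S j)" by simp
  finally show ?thesis .
qed

lemma Oset_Suc:
  assumes fS: "finite S"
  shows "card (Oset S (Suc j)) = (\<Sum>xs\<in>{xs. xs \<noteq> [] \<and> distinct xs \<and> set xs \<subseteq> S}. card (Oset (S - set xs) j))"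
proof -
  let ?X = "{xs. xs \<noteq> [] \<and> distinct xs \<and> set xs \<subseteq> S}"
  have fX: "finite ?X" by (rule finite_subset[OF _ finite_subset_distinct[OF fS]]) auto
  have bij: "bij_betw (\<lambda>(xs, ls). xs # ls) (Sigma ?X (\<lambda>xs. Oset (S - set xs) j)) (Oset S (Suc j))"
  proof (rule bij_betwI')
    show "\<And>x y. x \<in> Sigma ?X (\<lambda>xs. Oset (S - set xs) j) \<Longrightarrow> y \<in> Sigma ?X (\<lambda>xs. Oset (S - set xs) j) \<Longrightarrow>
        ((case x of (xs, ls) \<Rightarrow> xs # ls) = (case y of (xs, ls) \<Rightarrow> xs # ls)) = (x = y)"
      by auto
  next
    fix p assume p: "p \<in> Sigma ?X (\<lambda>xs. Oset (S - set xs) j)"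
    obtain xs ls where pp: "p = (xs, ls)" by (cases p)
    have xs: "xs \<noteq> []" "distinct xs" "set xs \<subseteq> S" and ls: "ls \<in> Oset (S - set xs) j"
      using p pp by auto
    have nin: "xs \<notin> set ls"
    proof
      assume "xs \<in> set ls"
      then have "set xs \<subseteq> S - set xs" using ls unfolding Oset_def by auto
      then show False using xs(1) by (cases xs) auto
    qed
    have U: "\<Union>(set ` set ls) = S - set xs" using ls unfolding Oset_def by auto
    have "\<forall>ys\<in>set ls. set xs \<inter> set ys = {}" using U by auto
    then show "(case p of (xs, ls) \<Rightarrow> xs # ls) \<in> Oset S (Suc j)"
      using pp xs ls nin U unfolding Oset_def by auto
  next
    fix ls' assume ls': "ls' \<in> Oset S (Suc j)"
    then obtain xs ls where e: "ls' = xs # ls" unfolding Oset_def by (cases ls') auto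
    have "(xs, ls) \<in> Sigma ?X (\<lambda>xs. Oset (S - set xs) j)"
    proof -
      have a: "length ls = j" "distinct ls" "xs \<notin> set ls" "xs \<noteq> []" "distinct xs"
        "\<forall>ys\<in>set ls. ys \<noteq> [] \<and> distinct ys"
        "\<forall>ys\<in>set ls. set xs \<inter> set ys = {}"
        "\<forall>us\<in>set ls. \<forall>ys\<in>set ls. us \<noteq> ys \<longrightarrow> set us \<inter> set ys = {}"
        "set xs \<union> \<Union>(set ` set ls) = S"
        using ls' e unfolding Oset_def by (auto 0 3)
      then have "\<Union>(set ` set ls) = S - set xs" by auto
      then show ?thesis using a unfolding Oset_def by auto
    qed
    then show "\<exists>p\<in>Sigma ?X (\<lambda>xs. Oset (S - set xs) j). ls' = (case p of (xs, ls) \<Rightarrow> xs # ls)"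
      using e by force
  qed
  have "card (Oset S (Suc j)) = card (Sigma ?X (\<lambda>xs. Oset (S - set xs) j))"
    using bij_betw_same_card[OF bij] by simp
  also have "\<dots> = (\<Sum>xs\<in>?X. card (Oset (S - set xs) j))"
    using fX fS finite_Oset by simp
  finally show ?thesis .
qed

definition oc :: "nat \<Rightarrow> nat \<Rightarrow> nat" where
  "oc n t = (if t = 0 then (if n = 0 then 1 else 0) else if n = 0 then 0 else fact n * ((n - 1) choose (t - 1)))"

lemma prod_fact_split:
  assumes "l \<le> n"
  shows "\<Prod>{n - l + 1..n} * fact (n - l) = (fact n :: nat)"
proof -
  have "fact n = (prod Suc {n - l..<n}) * (fact (n - l) :: nat)"
    using fact_split[OF assms, where 'a = nat] by simp
  also have "prod Suc {n - l..<n} = \<Prod>(Suc ` {n - l..<n})"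
    by (subst prod.reindex) auto
  also have "Suc ` {n - l..<n} = {n - l + 1..n}"
    by (simp add: image_Suc_atLeastLessThan atLeastLessThanSuc_atLeastAtMost)
  finally show ?thesis by simp
qed

lemma sum_choose_lessThan: "(\<Sum>k<m. k choose u) = m choose (Suc u)"
  by (cases m) (simp_all add: lessThan_Suc_atMost sum_choose_upper)

lemma sum_rev_choose: "(\<Sum>l\<in>{1..<n}. (n - 1 - l) choose u) = (n - 1) choose (Suc u)"
proof -
  have "(\<Sum>l\<in>{1..<n}. (n - 1 - l) choose u) = (\<Sum>k<n - 1. k choose u)"
    by (rule sum.reindex_bij_witness[where i = "\<lambda>k. n - 1 - k" and j = "\<lambda>l. n - 1 - l"]) auto
  then show ?thesis by (simp add: sum_choose_lessThan)
qed

lemma oc_rec: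
  "(\<Sum>l\<in>{1..n}. \<Prod>{n - l + 1..n} * oc (n - l) t) = oc n (Suc t)"
proof (cases "t = 0")
  case True
  have "(\<Sum>l\<in>{1..n}. \<Prod>{n - l + 1..n} * oc (n - l) t) = (\<Sum>l\<in>{1..n}. if l = n then \<Prod>{1..n} else 0)"
    by (rule sum.cong[OF refl]) (auto simp: oc_def True)
  also have "\<dots> = (if n = 0 then 0 else fact n)"
    by (simp add: fact_prod)
  finally show ?thesis using True by (simp add: oc_def)
next
  case False
  have "(\<Sum>l\<in>{1..n}. \<Prod>{n - l + 1..n} * oc (n - l) t) =
      (\<Sum>l\<in>{1..n}. if l < n then fact n * ((n - 1 - l) choose (t - 1)) else 0)"
  proof (rule sum.cong[OF refl])
    fix l assume l: "l \<in> {1..n}"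
    show "\<Prod>{n - l + 1..n} * oc (n - l) t = (if l < n then fact n * ((n - 1 - l) choose (t - 1)) else 0)"
    proof (cases "l < n")
      case True
      have "\<Prod>{n - l + 1..n} * oc (n - l) t = (\<Prod>{n - l + 1..n} * fact (n - l)) * ((n - l - 1) choose (t - 1))"
        using True False by (simp add: oc_def)
      also have "\<dots> = fact n * ((n - 1 - l) choose (t - 1))"
        using prod_fact_split[of l n] True by (simp add: algebra_simps)
      finally show ?thesis using True by simp
    next
      case False
      then show ?thesis using l \<open>t \<noteq> 0\<close> by (simp add: oc_def)
    qed
  qed
  also have "\<dots> = (\<Sum>l\<in>{1..<n}. fact n * ((n - 1 - l) choose (t - 1)))"
  proof -
    have "{1..n} = {1..<n} \<union> (if n \<ge> 1 then {n} else {})" by auto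
    then show ?thesis by (auto simp: sum.If_cases Int_def intro!: sum.cong)
  qed
  also have "\<dots> = fact n * ((n - 1) choose t)"
    using sum_rev_choose[of n "t - 1"] False by (simp add: sum_distrib_left[symmetric])
  finally show ?thesis using False by (simp add: oc_def)
qed

lemma Oset_zero: "Oset S 0 = (if S = {} then {[]} else {})"
  unfolding Oset_def by auto

lemma Oset_card: "finite S \<Longrightarrow> card (Oset S t) = oc (card S) t"
proof (induction t arbitrary: S)
  case 0
  then show ?case by (simp add: Oset_zero oc_def)
next
  case (Suc t)
  note fS = Suc.prems
  let ?X = "{xs. xs \<noteq> [] \<and> distinct xs \<and> set xs \<subseteq> S}"
  have fX: "finite ?X" by (rule finite_subset[OF _ finite_subset_distinct[OF fS]]) auto
  have "card (Oset S (Suc t)) = (\<Sum>xs\<in>?X. card (Oset (S - set xs) t))"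
    by (rule Oset_Suc[OF fS])
  also have "\<dots> = (\<Sum>xs\<in>?X. oc (card S - length xs) t)"
  proof (rule sum.cong[OF refl])
    fix xs assume xs: "xs \<in> ?X"
    have "card (S - set xs) = card S - length xs"
      using xs fS by (simp add: card_Diff_subset distinct_card)
    then show "card (Oset (S - set xs) t) = oc (card S - length xs) t"
      using Suc.IH[of "S - set xs"] fS by simp
  qed
  also have "\<dots> = (\<Sum>l\<in>{1..card S}. (\<Sum>xs\<in>{xs\<in>?X. length xs = l}. oc (card S - length xs) t))"
  proof (rule sum.group[symmetric, OF fX finite_atLeastAtMost])
    show "length ` ?X \<subseteq> {1..card S}"
    proof
      fix l assume "l \<in> length ` ?X"
      then obtain xs where xs: "xs \<in> ?X" "l = length xs" by auto
      have "length xs = card (set xs)" using xs by (simp add: distinct_card)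
      also have "\<dots> \<le> card S" using xs fS by (simp add: card_mono)
      finally show "l \<in> {1..card S}" using xs by (cases xs) auto
    qed
  qed
  also have "\<dots> = (\<Sum>l\<in>{1..card S}. \<Prod>{card S - l + 1..card S} * oc (card S - l) t)"
  proof (rule sum.cong[OF refl])
    fix l assume l: "l \<in> {1..card S}"
    have "{xs\<in>?X. length xs = l} = {xs. length xs = l \<and> distinct xs \<and> set xs \<subseteq> S}"
      using l by auto
    then have "card {xs\<in>?X. length xs = l} = \<Prod>{card S - l + 1..card S}"
      using card_lists_distinct_length_eq[OF fS, of l] l by simp
    then show "(\<Sum>xs\<in>{xs\<in>?X. length xs = l}. oc (card S - length xs) t) =
        \<Prod>{card S - l + 1..card S} * oc (card S - l) t"
      by simp
  qed
  also have "\<dots> = oc (card S) (Suc t)" by (rule oc_rec)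
  finally show ?case .
qed

lemma lah_closed:
  "fact t * lah r t = oc r t"
  using Oset_lahS[of "{0..<r}" t] Oset_card[of "{0..<r}" t] by (simp add: lah_lahS)


lemma x_choose_step: "x * (x choose t) = Suc t * (x choose Suc t) + t * (x choose t)"
proof -
  have a: "Suc x * (x choose t) = (Suc x choose Suc t) * Suc t" by (rule Suc_times_binomial_eq)
  have b: "(Suc x choose Suc t) = (x choose t) + (x choose Suc t)" by simp
  from a b show ?thesis by (simp add: algebra_simps)
qed

lemma x_ff_step: "x * ((x choose t) * fact t) = (x choose Suc t) * fact (Suc t) + t * ((x choose t) * fact t)"
proof -
  have "x * ((x choose t) * fact t) = (x * (x choose t)) * fact t" by simp
  also have "\<dots> = (Suc t * (x choose Suc t) + t * (x choose t)) * fact t" by (simp only: x_choose_step)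
  also have "\<dots> = (x choose Suc t) * (Suc t * fact t) + t * ((x choose t) * fact t)"
    by (simp add: algebra_simps)
  also have "Suc t * fact t = (fact (Suc t) :: nat)" by simp
  finally show ?thesis .
qed

lemma power_Stirling: "x ^ q = (\<Sum>t\<le>q. Stirling q t * ((x choose t) * fact t))"
proof (induction q)
  case 0
  then show ?case by simp
next
  case (Suc q)
  let ?ff = "\<lambda>t. (x choose t) * fact t"
  have "x ^ Suc q = (\<Sum>t\<le>q. Stirling q t * (x * ?ff t))"
    using Suc by (simp add: sum_distrib_left algebra_simps)
  also have "\<dots> = (\<Sum>t\<le>q. Stirling q t * ?ff (Suc t) + t * Stirling q t * ?ff t)"
  proof (rule sum.cong[OF refl])
    fix t
    have "Stirling q t * (x * ?ff t) = Stirling q t * (?ff (Suc t) + t * ?ff t)"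
      by (simp only: x_ff_step)
    then show "Stirling q t * (x * ?ff t) = Stirling q t * ?ff (Suc t) + t * Stirling q t * ?ff t"
      by (simp only: distrib_left mult.assoc mult.left_commute[of t])
  qed
  also have "\<dots> = (\<Sum>t\<le>q. Stirling q t * ?ff (Suc t)) + (\<Sum>t\<le>q. t * Stirling q t * ?ff t)"
    by (rule sum.distrib)
  also have "(\<Sum>t\<le>q. t * Stirling q t * ?ff t) = (\<Sum>t\<le>q. Suc t * Stirling q (Suc t) * ?ff (Suc t))"
  proof -
    have "(\<Sum>t\<le>Suc q. t * Stirling q t * ?ff t) = (\<Sum>t\<le>q. Suc t * Stirling q (Suc t) * ?ff (Suc t))"
      by (subst sum.atMost_Suc_shift) simp
    moreover have "(\<Sum>t\<le>Suc q. t * Stirling q t * ?ff t) = (\<Sum>t\<le>q. t * Stirling q t * ?ff t)"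
      by simp
    ultimately show ?thesis by simp
  qed
  also have "(\<Sum>t\<le>q. Stirling q t * ?ff (Suc t)) + (\<Sum>t\<le>q. Suc t * Stirling q (Suc t) * ?ff (Suc t))
      = (\<Sum>t\<le>q. Stirling (Suc q) (Suc t) * ?ff (Suc t))"
    by (simp add: sum.distrib[symmetric] algebra_simps del: fact_Suc)
  also have "\<dots> = (\<Sum>t\<le>Suc q. Stirling (Suc q) t * ?ff t)"
    using sum.atMost_Suc_shift[of "\<lambda>t. Stirling (Suc q) t * ?ff t" q] by simp
  finally show ?case .
qed

lemma power_Stirling_ext:
  assumes "x \<le> s"
  shows "x ^ q = (\<Sum>t\<le>s. Stirling q t * ((x choose t) * fact t))"
proof -
  have "x ^ q = (\<Sum>t\<le>q + s. Stirling q t * ((x choose t) * fact t))"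
    unfolding power_Stirling by (rule sum.mono_neutral_left) auto
  also have "\<dots> = (\<Sum>t\<le>s. Stirling q t * ((x choose t) * fact t))"
    by (rule sum.mono_neutral_right) (use assms in auto)
  finally show ?thesis .
qed

lemma oc_sum:
  "(\<Sum>r\<le>u. (u choose r) * fact (u - r) * oc r t) = fact u * (u choose t)"
proof (cases "t = 0")
  case True
  have "(\<Sum>r\<le>u. (u choose r) * fact (u - r) * oc r t) = (\<Sum>r\<le>u. if r = 0 then fact u else 0)"
    by (rule sum.cong[OF refl]) (simp add: oc_def True)
  then show ?thesis using True by simp
next
  case False
  have "(\<Sum>r\<le>u. (u choose r) * fact (u - r) * oc r t) = (\<Sum>r\<le>u. if r = 0 then 0 else fact u * ((r - 1) choose (t - 1)))"
  proof (rule sum.cong[OF refl])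
    fix r assume r: "r \<in> {..u}"
    show "(u choose r) * fact (u - r) * oc r t = (if r = 0 then 0 else fact u * ((r - 1) choose (t - 1)))"
    proof (cases "r = 0")
      case True then show ?thesis using False by (simp add: oc_def)
    next
      case nz: False
      have "fact r * fact (u - r) * (u choose r) = (fact u :: nat)"
        using r by (intro binomial_fact_lemma) simp
      then show ?thesis using nz False by (simp add: oc_def algebra_simps)
    qed
  qed
  also have "\<dots> = fact u * (\<Sum>r\<in>{1..u}. (r - 1) choose (t - 1))"
  proof -
    have "(\<Sum>r\<le>u. if r = 0 then 0 else fact u * ((r - 1) choose (t - 1))) = (\<Sum>r\<in>{1..u}. fact u * ((r - 1) choose (t - 1)))"
      by (rule sum.mono_neutral_cong_right) auto
    then show ?thesis by (simp add: sum_distrib_left)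
  qed
  also have "(\<Sum>r\<in>{1..u}. (r - 1) choose (t - 1)) = (\<Sum>k<u. k choose (t - 1))"
    by (rule sum.reindex_bij_witness[where i = "\<lambda>k. Suc k" and j = "\<lambda>r. r - 1"]) auto
  also have "\<dots> = u choose t" using False by (simp add: sum_choose_lessThan)
  finally show ?thesis by simp
qed

lemma choose_swap:
  assumes "r + i \<le> s"
  shows "(s choose r) * ((s - r) choose i) = (s choose i) * ((s - i) choose r)"
proof -
  define m where "m = s - r - i"
  have s: "s = m + r + i" and sr: "s - r = m + i" and si: "s - i = m + r"
    using assms unfolding m_def by auto
  have a: "(m + r + i) choose r = (m + r + i) choose (m + i)"
    using binomial_symmetric[of r "m + r + i"] by simp
  have b: "(m + r) choose r = (m + r) choose m"
    using binomial_symmetric[of r "m + r"] by simp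
  have "((m + r + i) choose (m + i)) * ((m + i) choose i) = ((m + r + i) choose i) * ((m + r) choose m)"
    by (rule choose_mult_lemma)
  then show ?thesis unfolding sr si unfolding s a b .
qed

lemma sum_swap_tri:
  fixes s :: nat and F :: "nat \<Rightarrow> nat \<Rightarrow> 'a :: comm_monoid_add"
  shows "(\<Sum>r\<le>s. \<Sum>i\<le>s - r. F r i) = (\<Sum>i\<le>s. \<Sum>r\<le>s - i. F r i)"
proof -
  have "(\<Sum>r\<le>s. \<Sum>i\<le>s - r. F r i) = (\<Sum>r\<le>s. \<Sum>i\<in>{i\<in>{..s}. r + i \<le> s}. F r i)"
    by (rule sum.cong[OF refl], rule sum.cong) auto
  also have "\<dots> = (\<Sum>i\<le>s. \<Sum>r\<in>{r\<in>{..s}. r + i \<le> s}. F r i)"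
    by (rule sum.swap_restrict) auto
  also have "\<dots> = (\<Sum>i\<le>s. \<Sum>r\<le>s - i. F r i)"
    by (rule sum.cong[OF refl], rule sum.cong) auto
  finally show ?thesis .
qed

lemma lah_zero_less: "r < t \<Longrightarrow> lah r t = 0"
proof -
  assume "r < t"
  then have "oc r t = 0" by (cases r) (auto simp: oc_def)
  then show ?thesis using lah_closed[of t r] by simp
qed

lemma A3a:
  "(fact t :: int)^2 * (int (s choose r) * int (lah r t) * int (derangements_num (s - r))) =
   int (s choose r) * (fact t * int (oc r t)) * fC (s - r) 0"
proof -
  have h: "(fact t :: int) * int (lah r t) = int (oc r t)"
  proof -
    have "int (fact t * lah r t) = int (oc r t)" using lah_closed[of t r] by (rule arg_cong)
    then show ?thesis by (simp only: of_nat_mult of_nat_fact)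
  qed
  have "(fact t :: int)^2 * (int (s choose r) * int (lah r t) * int (derangements_num (s - r))) =
      int (s choose r) * (fact t * (fact t * int (lah r t))) * int (derangements_num (s - r))"
    by (simp only: power2_eq_square ac_simps)
  also have "\<dots> = int (s choose r) * (fact t * int (oc r t)) * fC (s - r) 0"
    by (simp only: h derangements_num_fC)
  finally show ?thesis .
qed

lemma A3b:
  assumes r: "r \<le> s"
  shows "int (s choose r) * X * fC (s - r) 0 =
    (\<Sum>i\<le>s - r. (-1)^i * int (s choose i) * int ((s - i) choose r) * fact (s - i - r) * X)"
proof -
  have "int (s choose r) * X * fC (s - r) 0 =
      (\<Sum>i\<le>s - r. int (s choose r) * X * ((-1)^i * int ((s - r) choose i) * fact (s - r - i)))"
    unfolding fC_def by (simp add: sum_distrib_left)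
  also have "\<dots> = (\<Sum>i\<le>s - r. (-1)^i * int (s choose i) * int ((s - i) choose r) * fact (s - i - r) * X)"
  proof (rule sum.cong[OF refl])
    fix i assume i: "i \<in> {..s - r}"
    then have "r + i \<le> s" using r by auto
    then have e: "int (s choose r) * int ((s - r) choose i) = int (s choose i) * int ((s - i) choose r)"
      using choose_swap[of r i s] by (metis of_nat_mult)
    have e2: "s - r - i = s - i - r" by simp
    have "int (s choose r) * X * ((-1)^i * int ((s - r) choose i) * fact (s - r - i)) =
        (-1)^i * (int (s choose r) * int ((s - r) choose i)) * fact (s - r - i) * X"
      by (simp only: ac_simps)
    also have "\<dots> = (-1)^i * (int (s choose i) * int ((s - i) choose r)) * fact (s - i - r) * X"
      by (simp only: e e2)
    also have "\<dots> = (-1)^i * int (s choose i) * int ((s - i) choose r) * fact (s - i - r) * X"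
      by (simp only: ac_simps)
    finally show "int (s choose r) * X * ((-1)^i * int ((s - r) choose i) * fact (s - r - i)) =
        (-1)^i * int (s choose i) * int ((s - i) choose r) * fact (s - i - r) * X" .
  qed
  finally show ?thesis .
qed

lemma A3c:
  "(\<Sum>r\<le>s - i. (-1)^i * int (s choose i) * int ((s - i) choose r) * fact (s - i - r) * (fact t * int (oc r t))) =
   (-1)^i * int (s choose i) * fact (s - i) * int ((s - i choose t) * fact t)"
proof -
  have "(\<Sum>r\<le>s - i. (-1)^i * int (s choose i) * int ((s - i) choose r) * fact (s - i - r) * (fact t * int (oc r t))) =
      (\<Sum>r\<le>s - i. ((-1)^i * int (s choose i) * fact t) * int (((s - i) choose r) * fact (s - i - r) * oc r t))"
    by (rule sum.cong[OF refl]) (simp only: of_nat_mult of_nat_fact ac_simps)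
  also have "\<dots> = ((-1)^i * int (s choose i) * fact t) * int (\<Sum>r\<le>s - i. ((s - i) choose r) * fact (s - i - r) * oc r t)"
    by (simp only: sum_distrib_left of_nat_sum)
  also have "\<dots> = ((-1)^i * int (s choose i) * fact t) * int (fact (s - i) * ((s - i) choose t))"
    by (simp only: oc_sum)
  also have "\<dots> = (-1)^i * int (s choose i) * fact (s - i) * int ((s - i choose t) * fact t)"
    by (simp only: of_nat_mult of_nat_fact ac_simps)
  finally show ?thesis .
qed

lemma A3:
  "(fact t)^2 * (\<Sum>r\<le>s. int (s choose r) * int (lah r t) * int (derangements_num (s - r))) =
   (\<Sum>j\<le>s. (-1)^j * int (s choose j) * fact (s - j) * int ((s - j choose t) * fact t))"
proof -
  have "(fact t)^2 * (\<Sum>r\<le>s. int (s choose r) * int (lah r t) * int (derangements_num (s - r))) =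
     (\<Sum>r\<le>s. int (s choose r) * (fact t * int (oc r t)) * fC (s - r) 0)"
    unfolding sum_distrib_left by (rule sum.cong[OF refl]) (rule A3a)
  also have "\<dots> = (\<Sum>r\<le>s. \<Sum>i\<le>s - r. (-1)^i * int (s choose i) * int ((s - i) choose r) * fact (s - i - r) * (fact t * int (oc r t)))"
    by (rule sum.cong[OF refl]) (rule A3b, simp)
  also have "\<dots> = (\<Sum>i\<le>s. \<Sum>r\<le>s - i. (-1)^i * int (s choose i) * int ((s - i) choose r) * fact (s - i - r) * (fact t * int (oc r t)))"
    by (rule sum_swap_tri)
  also have "\<dots> = (\<Sum>j\<le>s. (-1)^j * int (s choose j) * fact (s - j) * int ((s - j choose t) * fact t))"
    by (rule sum.cong[OF refl]) (rule A3c)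
  finally show ?thesis .
qed

lemma key_identity:
  "fC s q = (\<Sum>t=0..s. (fact t)^2 * int (Stirling q t) *
      (\<Sum>r=t..s. int (s choose r) * int (lah r t) * int (derangements_num (s - r))))"
proof -
  have "fC s q = (\<Sum>j\<le>s. (-1)^j * int (s choose j) * fact (s - j) *
      (\<Sum>t\<le>s. int (Stirling q t) * int ((s - j choose t) * fact t)))"
    unfolding fC_def
  proof (rule sum.cong[OF refl])
    fix j assume "j \<in> {..s}"
    have "int (s - j) ^ q = int ((s - j) ^ q)" by simp
    also have "\<dots> = (\<Sum>t\<le>s. int (Stirling q t) * int ((s - j choose t) * fact t))"
      using power_Stirling_ext[of "s - j" s q] by (simp add: of_nat_sum)
    finally show "(-1)^j * int (s choose j) * fact (s - j) * int (s - j) ^ q =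
      (-1)^j * int (s choose j) * fact (s - j) * (\<Sum>t\<le>s. int (Stirling q t) * int ((s - j choose t) * fact t))"
      by simp
  qed
  also have "\<dots> = (\<Sum>t\<le>s. int (Stirling q t) * (\<Sum>j\<le>s. (-1)^j * int (s choose j) * fact (s - j) * int ((s - j choose t) * fact t)))"
  proof -
    have "(\<Sum>j\<le>s. (-1)^j * int (s choose j) * fact (s - j) *
      (\<Sum>t\<le>s. int (Stirling q t) * int ((s - j choose t) * fact t))) =
      (\<Sum>j\<le>s. \<Sum>t\<le>s. int (Stirling q t) * ((-1)^j * int (s choose j) * fact (s - j) * int ((s - j choose t) * fact t)))"
      by (simp only: sum_distrib_left mult.left_commute)
    also have "\<dots> = (\<Sum>t\<le>s. \<Sum>j\<le>s. int (Stirling q t) * ((-1)^j * int (s choose j) * fact (s - j) * int ((s - j choose t) * fact t)))"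
      by (rule sum.swap)
    also have "\<dots> = (\<Sum>t\<le>s. int (Stirling q t) * (\<Sum>j\<le>s. (-1)^j * int (s choose j) * fact (s - j) * int ((s - j choose t) * fact t)))"
      by (simp only: sum_distrib_left)
    finally show ?thesis .
  qed
  also have "\<dots> = (\<Sum>t\<le>s. int (Stirling q t) * ((fact t)^2 * (\<Sum>r\<le>s. int (s choose r) * int (lah r t) * int (derangements_num (s - r)))))"
    by (simp only: A3)
  also have "\<dots> = (\<Sum>t=0..s. (fact t)^2 * int (Stirling q t) *
      (\<Sum>r=t..s. int (s choose r) * int (lah r t) * int (derangements_num (s - r))))"
  proof (rule sum.cong)
    show "{..s} = {0..s}" by auto
  next
    fix t assume "t \<in> {0..s}"
    have "(\<Sum>r\<le>s. int (s choose r) * int (lah r t) * int (derangements_num (s - r))) =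
        (\<Sum>r=t..s. int (s choose r) * int (lah r t) * int (derangements_num (s - r)))"
      by (rule sum.mono_neutral_right) (auto simp: lah_zero_less)
    then show "int (Stirling q t) * ((fact t)^2 * (\<Sum>r\<le>s. int (s choose r) * int (lah r t) * int (derangements_num (s - r)))) =
      (fact t)^2 * int (Stirling q t) * (\<Sum>r=t..s. int (s choose r) * int (lah r t) * int (derangements_num (s - r)))"
      by simp
  qed
  finally show ?thesis .
qed


definition vl :: "nat \<Rightarrow> nat \<Rightarrow> nat \<Rightarrow> nat list \<Rightarrow> bool" where
  "vl n k i xs \<longleftrightarrow> length xs = i \<and> distinct xs \<and> set xs \<subseteq> {1..n} \<and>
     (\<forall>j<i. k \<le> j \<longrightarrow> Suc j \<notin> set (take j xs) \<longrightarrow> xs ! j = Suc j)"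

definition wt :: "nat \<Rightarrow> nat \<Rightarrow> nat \<Rightarrow> nat list \<Rightarrow> real" where
  "wt n k i xs = (\<Prod>j\<in>{j. j < i \<and> (j < k \<or> Suc j \<in> set (take j xs))}. 1 / real (n - j))"

lemma pmf_bind_snoc:
  "pmf (M \<bind> (\<lambda>xs. N xs \<bind> (\<lambda>s. return_pmf (xs @ [s])))) ys =
     (if ys = [] then 0 else pmf M (butlast ys) * pmf (N (butlast ys)) (last ys))"
proof -
  have inner: "pmf (N xs \<bind> (\<lambda>s. return_pmf (xs @ [s]))) ys =
      (if ys \<noteq> [] \<and> butlast ys = xs then pmf (N xs) (last ys) else 0)" for xs
  proof -
    have "N xs \<bind> (\<lambda>s. return_pmf (xs @ [s])) = map_pmf (\<lambda>s. xs @ [s]) (N xs)"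
      by (simp add: map_pmf_def)
    moreover have "(\<lambda>s. xs @ [s]) -` {ys} = (if ys \<noteq> [] \<and> butlast ys = xs then {last ys} else {})"
      by (auto simp: snoc_eq_iff_butlast)
    ultimately show ?thesis by (simp add: pmf_map measure_pmf_single)
  qed
  have "pmf (M \<bind> (\<lambda>xs. N xs \<bind> (\<lambda>s. return_pmf (xs @ [s])))) ys =
      measure_pmf.expectation M (\<lambda>xs. if ys \<noteq> [] \<and> butlast ys = xs then pmf (N xs) (last ys) else 0)"
    by (simp only: pmf_bind[of M] inner)
  also have "\<dots> = measure_pmf.expectation M (\<lambda>xs. indicator {butlast ys} xs * (if ys = [] then 0 else pmf (N (butlast ys)) (last ys)))"
    by (rule Bochner_Integration.integral_cong) (auto simp: indicator_def)
  also have "\<dots> = measure_pmf.prob M {butlast ys} * (if ys = [] then 0 else pmf (N (butlast ys)) (last ys))"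
    by simp
  also have "\<dots> = (if ys = [] then 0 else pmf M (butlast ys) * pmf (N (butlast ys)) (last ys))"
    by (simp add: measure_pmf_single)
  finally show ?thesis .
qed

lemma vl_snoc:
  "vl n k (Suc i) (xs @ [s]) \<longleftrightarrow> vl n k i xs \<and> s \<in> {1..n} \<and> s \<notin> set xs \<and>
      (k \<le> i \<longrightarrow> Suc i \<notin> set xs \<longrightarrow> s = Suc i)"
proof -
  have "length xs = i \<Longrightarrow> (\<forall>j<Suc i. k \<le> j \<longrightarrow> Suc j \<notin> set (take j (xs @ [s])) \<longrightarrow> (xs @ [s]) ! j = Suc j) \<longleftrightarrow>
     (\<forall>j<i. k \<le> j \<longrightarrow> Suc j \<notin> set (take j xs) \<longrightarrow> xs ! j = Suc j) \<and>
     (k \<le> i \<longrightarrow> Suc i \<notin> set xs \<longrightarrow> s = Suc i)"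
    by (auto simp: less_Suc_eq nth_append)
  then show ?thesis unfolding vl_def by auto
qed

lemma wt_snoc:
  assumes "length xs = i"
  shows "wt n k (Suc i) (xs @ [s]) = wt n k i xs * (if i < k \<or> Suc i \<in> set xs then 1 / real (n - i) else 1)"
proof -
  have "{j. j < Suc i \<and> (j < k \<or> Suc j \<in> set (take j (xs @ [s])))} =
      {j. j < i \<and> (j < k \<or> Suc j \<in> set (take j xs))} \<union> (if i < k \<or> Suc i \<in> set xs then {i} else {})"
    using assms by (auto simp: less_Suc_eq)
  then show ?thesis unfolding wt_def by (auto simp: prod.union_disjoint)
qed

lemma vl_len: "vl n k i xs \<Longrightarrow> length xs = i" by (simp add: vl_def)

lemma card_free:
  assumes "vl n k i xs"
  shows "card ({1..n} - set xs) = n - i"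
proof -
  have "card ({1..n} - set xs) = card {1..n} - card (set xs)"
    using assms unfolding vl_def by (intro card_Diff_subset) auto
  also have "card (set xs) = i" using assms unfolding vl_def by (simp add: distinct_card)
  finally show ?thesis by simp
qed

lemma pmf_seating:
  "i \<le> n \<Longrightarrow> pmf (seating n k i) xs = (if vl n k i xs then wt n k i xs else 0)"
proof (induction i arbitrary: xs)
  case 0
  have "vl n k 0 xs \<longleftrightarrow> xs = []" unfolding vl_def by auto
  moreover have "wt n k 0 [] = 1" unfolding wt_def by simp
  ultimately show ?case by (auto simp: indicator_def)
next
  case (Suc i)
  define N where "N = (\<lambda>xs. if Suc i \<le> k \<or> Suc i \<in> set xs then pmf_of_set ({1..n} - set xs) else return_pmf (Suc i))"
  have seq: "seating n k (Suc i) = seating n k i \<bind> (\<lambda>xs. N xs \<bind> (\<lambda>s. return_pmf (xs @ [s])))"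
    unfolding N_def by simp
  show ?case
  proof (cases "xs = []")
    case True
    then have "\<not> vl n k (Suc i) xs" unfolding vl_def by auto
    then show ?thesis unfolding seq pmf_bind_snoc using True by simp
  next
    case False
    then obtain ys s where xs: "xs = ys @ [s]" by (metis append_butlast_last_id)
    have "pmf (seating n k (Suc i)) xs = pmf (seating n k i) ys * pmf (N ys) s"
      unfolding seq pmf_bind_snoc using xs by simp
    also have "\<dots> = (if vl n k i ys then wt n k i ys else 0) * pmf (N ys) s"
      using Suc by simp
    also have "\<dots> = (if vl n k (Suc i) xs then wt n k (Suc i) xs else 0)"
    proof (cases "vl n k i ys")
      case False
      then show ?thesis unfolding xs vl_snoc by simp
    next
      case True
      have len: "length ys = i" using True by (rule vl_len)
      have il: "i < n" using Suc.prems by simp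
      show ?thesis
      proof (cases "i < k \<or> Suc i \<in> set ys")
        case c: True
        have cf: "card ({1..n} - set ys) = n - i" by (rule card_free[OF True])
        have F1: "{1..n} - set ys \<noteq> {}"
        proof
          assume "{1..n} - set ys = {}"
          then have "card ({1..n} - set ys) = 0" by (metis card.empty)
          then show False using cf il by linarith
        qed
        have F: "{1..n} - set ys \<noteq> {}" "finite ({1..n} - set ys)" using F1 by auto
        have "pmf (N ys) s = indicator ({1..n} - set ys) s / real (n - i)"
          unfolding N_def using c F card_free[OF True] by (auto simp: pmf_of_set)
        then show ?thesis unfolding xs vl_snoc wt_snoc[OF len] using True c
          by (auto simp: indicator_def)
      next
        case c: False
        have "pmf (N ys) s = indicator {Suc i} s"
          unfolding N_def using c by (auto simp: indicator_def)
        moreover have "Suc i \<in> {1..n}" using il by auto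
        ultimately show ?thesis unfolding xs vl_snoc wt_snoc[OF len] using True c
          by (auto simp: indicator_def)
      qed
    qed
    finally show ?thesis .
  qed
qed

lemma prob_seating:
  "measure_pmf.prob (seating n k n) {xs. misseated n xs = m} =
     (\<Sum>xs\<in>{xs. vl n k n xs \<and> misseated n xs = m}. wt n k n xs)"
proof -
  let ?M = "seating n k n"
  let ?A = "{xs. misseated n xs = m}"
  let ?B = "{xs. vl n k n xs \<and> misseated n xs = m}"
  have sp: "set_pmf ?M \<subseteq> {xs. vl n k n xs}"
    using pmf_seating[of n n k] by (auto simp: set_pmf_eq)
  have fB: "finite ?B"
  proof (rule finite_subset)
    show "?B \<subseteq> {xs. set xs \<subseteq> {1..n} \<and> length xs = n}" unfolding vl_def by auto
    show "finite {xs. set xs \<subseteq> {1..n} \<and> length xs = n}" by (rule finite_lists_length_eq) simp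
  qed
  have "measure_pmf.prob ?M ?A = measure_pmf.prob ?M (?A \<inter> set_pmf ?M)"
    by (simp add: measure_Int_set_pmf)
  also have "?A \<inter> set_pmf ?M = ?B \<inter> set_pmf ?M" using sp by auto
  also have "measure_pmf.prob ?M (?B \<inter> set_pmf ?M) = measure_pmf.prob ?M ?B"
    by (simp add: measure_Int_set_pmf)
  also have "\<dots> = (\<Sum>xs\<in>?B. pmf ?M xs)" by (rule measure_measure_pmf_finite[OF fB])
  also have "\<dots> = (\<Sum>xs\<in>?B. wt n k n xs)"
    by (rule sum.cong[OF refl]) (simp add: pmf_seating)
  finally show ?thesis .
qed


declare upt_Suc[simp del]

definition Aof :: "nat \<Rightarrow> nat list \<Rightarrow> nat set" where
  "Aof k xs = {j\<in>{1..k}. xs ! (j - 1) \<noteq> j}"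
definition Dof :: "nat \<Rightarrow> nat \<Rightarrow> nat list \<Rightarrow> nat set" where
  "Dof n k xs = {j\<in>{Suc k..n}. xs ! (j - 1) \<noteq> j}"

lemma misseated_AD:
  assumes "k \<le> n"
  shows "misseated n xs = card (Aof k xs) + card (Dof n k xs)"
proof -
  have "{i\<in>{1..n}. xs ! (i - 1) \<noteq> i} = Aof k xs \<union> Dof n k xs"
    unfolding Aof_def Dof_def using assms by auto
  moreover have "Aof k xs \<inter> Dof n k xs = {}" unfolding Aof_def Dof_def by auto
  ultimately show ?thesis unfolding misseated_def
    by (simp add: card_Un_disjoint Aof_def Dof_def)
qed

lemma map_upt_nth: "j \<in> {1..n} \<Longrightarrow> map \<tau> [1..<Suc n] ! (j - 1) = \<tau> j"
  by (auto simp del: upt_Suc simp add: nth_map)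

lemma Cset_sub:
  assumes "\<tau> \<in> Cset A D" "A \<subseteq> {1..k}" "D \<subseteq> {Suc k..n}" "k \<le> n"
  shows "\<tau> permutes {1..n}"
proof -
  have "\<tau> permutes A \<union> D" using assms(1) unfolding Cset_def by auto
  moreover have "A \<union> D \<subseteq> {1..n}" using assms(2-4) by auto
  ultimately show ?thesis by (rule permutes_subset)
qed

lemma map_in_B:
  assumes t: "\<tau> \<in> Cset A D" and A: "A \<subseteq> {1..k}" and D: "D \<subseteq> {Suc k..n}" and kn: "k \<le> n"
  shows "vl n k n (map \<tau> [1..<Suc n]) \<and> Aof k (map \<tau> [1..<Suc n]) = A \<and> Dof n k (map \<tau> [1..<Suc n]) = D"
proof -
  let ?xs = "map \<tau> [1..<Suc n]"
  have tp: "\<tau> permutes A \<union> D" and der: "\<forall>z\<in>A \<union> D. \<tau> z \<noteq> z"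
    and cond: "\<forall>z\<in>A \<union> D. \<tau> z \<in> D \<longrightarrow> z < \<tau> z" using t unfolding Cset_def by auto
  have tn: "\<tau> permutes {1..n}" by (rule Cset_sub[OF t A D kn])
  have fx: "\<tau> j = j" if "j \<notin> A \<union> D" for j using tp that by (simp add: permutes_not_in)
  have len: "length ?xs = n" by simp
  have dist: "distinct ?xs"
    by (simp add: distinct_map permutes_inj_on[OF tn])
  have rng: "set ?xs \<subseteq> {1..n}"
  proof
    fix y assume "y \<in> set ?xs"
    then obtain x where "x \<in> {1..n}" "y = \<tau> x" by (auto simp: less_Suc_eq_le)
    then show "y \<in> {1..n}" using permutes_in[OF tn] by auto
  qed
  have nth: "?xs ! j = \<tau> (Suc j)" if "j < n" for j using that by (simp add: nth_map)
  have take: "set (take j ?xs) = \<tau> ` {1..j}" if "j < n" for j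
  proof -
    have "take j [1..<Suc n] = [1..<1 + j]" using that by (intro take_upt) simp
    then have "set (take j ?xs) = \<tau> ` {1..<1 + j}" by (simp add: take_map)
    also have "{1..<1 + j} = {1..j}" by auto
    finally show ?thesis .
  qed
  have c: "\<forall>j<n. k \<le> j \<longrightarrow> Suc j \<notin> set (take j ?xs) \<longrightarrow> ?xs ! j = Suc j"
  proof (intro allI impI)
    fix j assume j: "j < n" "k \<le> j" and nin: "Suc j \<notin> set (take j ?xs)"
    show "?xs ! j = Suc j"
    proof (rule ccontr)
      assume ne: "?xs ! j \<noteq> Suc j"
      then have "\<tau> (Suc j) \<noteq> Suc j" using nth j by simp
      then have "Suc j \<in> A \<union> D" using fx by auto
      then have sjD: "Suc j \<in> D" using A j by auto
      have "Suc j \<in> \<tau> ` (A \<union> D)" using \<open>Suc j \<in> A \<union> D\<close> by (simp only: permutes_image[OF tp])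
      then obtain z where z': "Suc j = \<tau> z" "z \<in> A \<union> D" by (rule imageE)
      then have z: "z \<in> A \<union> D" "\<tau> z = Suc j" by simp_all
      then have "z < Suc j" using cond[rule_format, OF z(1)] z(2) sjD by simp
      moreover have "z \<ge> 1" using z A D by auto
      ultimately have "z \<in> {1..j}" by simp
      then have "Suc j \<in> \<tau> ` {1..j}" using z(2) by (intro rev_image_eqI[of z]) auto
      moreover have "set (take j ?xs) = \<tau> ` {1..j}" using j(1) by (rule take)
      ultimately show False using nin by simp
    qed
  qed
  have vl: "vl n k n ?xs" unfolding vl_def using len dist rng c by simp
  have "Aof k ?xs = {j\<in>{1..k}. \<tau> j \<noteq> j}" unfolding Aof_def
  proof (rule Collect_cong)
    fix j show "(j \<in> {1..k} \<and> ?xs ! (j - 1) \<noteq> j) = (j \<in> {1..k} \<and> \<tau> j \<noteq> j)"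
      using map_upt_nth[of j n \<tau>] kn by auto
  qed
  also have "\<dots> = A"
  proof
    show "{j\<in>{1..k}. \<tau> j \<noteq> j} \<subseteq> A"
    proof
      fix j assume j: "j \<in> {j\<in>{1..k}. \<tau> j \<noteq> j}"
      then have "j \<in> A \<union> D" using fx by blast
      then show "j \<in> A" using j D by auto
    qed
    show "A \<subseteq> {j\<in>{1..k}. \<tau> j \<noteq> j}" using A der by auto
  qed
  finally have a: "Aof k ?xs = A" .
  have "Dof n k ?xs = {j\<in>{Suc k..n}. \<tau> j \<noteq> j}" unfolding Dof_def
  proof (rule Collect_cong)
    fix j show "(j \<in> {Suc k..n} \<and> ?xs ! (j - 1) \<noteq> j) = (j \<in> {Suc k..n} \<and> \<tau> j \<noteq> j)"
      using map_upt_nth[of j n \<tau>] by auto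
  qed
  also have "\<dots> = D"
  proof
    show "{j\<in>{Suc k..n}. \<tau> j \<noteq> j} \<subseteq> D"
    proof
      fix j assume j: "j \<in> {j\<in>{Suc k..n}. \<tau> j \<noteq> j}"
      then have "j \<in> A \<union> D" using fx by blast
      then show "j \<in> D" using j A by auto
    qed
    show "D \<subseteq> {j\<in>{Suc k..n}. \<tau> j \<noteq> j}" using D der by auto
  qed
  finally have d: "Dof n k ?xs = D" .
  show ?thesis using vl a d by simp
qed

lemma B_in_map:
  assumes v: "vl n k n xs" and kn: "k \<le> n"
  shows "\<exists>\<tau>\<in>Cset (Aof k xs) (Dof n k xs). xs = map \<tau> [1..<Suc n]"
proof -
  define \<tau> where "\<tau> = (\<lambda>i. if i \<in> {1..n} then xs ! (i - 1) else i)"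
  define A where "A = Aof k xs"
  define D where "D = Dof n k xs"
  have len: "length xs = n" and dist: "distinct xs" and rng: "set xs \<subseteq> {1..n}"
    and c: "\<forall>j<n. k \<le> j \<longrightarrow> Suc j \<notin> set (take j xs) \<longrightarrow> xs ! j = Suc j"
    using v unfolding vl_def by auto
  have setxs: "set xs = {1..n}"
    using card_subset_eq[OF _ rng] dist len by (simp add: distinct_card)
  have xs_eq: "xs = map \<tau> [1..<Suc n]"
    by (rule nth_equalityI) (auto simp: len \<tau>_def nth_map)
  have inj: "inj_on \<tau> {1..n}"
  proof (rule inj_onI)
    fix x y assume x: "x \<in> {1..n}" and y: "y \<in> {1..n}" and e: "\<tau> x = \<tau> y"
    then have "xs ! (x - 1) = xs ! (y - 1)" unfolding \<tau>_def by simp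
    then have "x - 1 = y - 1" using nth_eq_iff_index_eq[OF dist, of "x - 1" "y - 1"] len x y by auto
    moreover have "x \<ge> 1" "y \<ge> 1" using x y by auto
    ultimately show "x = y" by arith
  qed
  have img: "\<tau> ` {1..n} = {1..n}"
  proof -
    have "\<tau> ` {1..n} = set xs" unfolding xs_eq by (simp add: atLeastLessThanSuc_atLeastAtMost)
    then show ?thesis using setxs by simp
  qed
  have bij: "bij_betw \<tau> {1..n} {1..n}" unfolding bij_betw_def using inj img by blast
  have st: "\<And>x. x \<notin> {1..n} \<Longrightarrow> \<tau> x = x" unfolding \<tau>_def by auto
  have tn: "\<tau> permutes {1..n}" by (rule bij_imp_permutes[OF bij st])
  have ADsub: "A \<union> D \<subseteq> {1..n}" unfolding A_def D_def Aof_def Dof_def using kn by auto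
  have fixo: "\<tau> x = x" if "x \<in> {1..n} - (A \<union> D)" for x
  proof -
    have "x \<in> {1..n}" "x \<notin> A" "x \<notin> D" using that by auto
    then show ?thesis unfolding A_def D_def Aof_def Dof_def \<tau>_def by (cases "x \<le> k") auto
  qed
  have tp: "\<tau> permutes A \<union> D" by (rule permutes_superset[OF tn fixo])
  have der: "\<forall>z\<in>A \<union> D. \<tau> z \<noteq> z"
    unfolding A_def D_def Aof_def Dof_def \<tau>_def using kn by auto
  have cond: "\<forall>z\<in>A \<union> D. \<tau> z \<in> D \<longrightarrow> z < \<tau> z"
  proof (intro ballI impI)
    fix z assume z: "z \<in> A \<union> D" and tz: "\<tau> z \<in> D"
    define d where "d = \<tau> z"
    have dD: "d \<in> {Suc k..n}" "xs ! (d - 1) \<noteq> d" using tz unfolding d_def D_def Dof_def by auto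
    define j where "j = d - 1"
    have j: "j < n" "k \<le> j" "Suc j = d" using dD unfolding j_def by auto
    have "xs ! j \<noteq> Suc j" using dD j unfolding j_def by simp
    then have "Suc j \<in> set (take j xs)" using c j by blast
    then obtain i where i: "i < j" "xs ! i = Suc j"
      using j len by (auto simp: in_set_conv_nth)
    have "\<tau> (Suc i) = d" unfolding \<tau>_def using i j by auto
    moreover have "z \<in> {1..n}" using z ADsub by auto
    moreover have "Suc i \<in> {1..n}" using i j by auto
    ultimately have "z = Suc i" using inj d_def by (auto dest: inj_onD)
    then show "z < \<tau> z" using i j d_def by simp
  qed
  have "\<tau> \<in> Cset A D" unfolding Cset_def using tp der cond by auto
  then show ?thesis using xs_eq unfolding A_def D_def by auto
qed

lemma inj_map_Cset:
  assumes "A \<subseteq> {1..k}" "D \<subseteq> {Suc k..n}" "k \<le> n"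
  shows "inj_on (\<lambda>\<tau>. map \<tau> [1..<Suc n]) (Cset A D)"
proof (rule inj_onI)
  fix t1 t2 assume t1: "t1 \<in> Cset A D" and t2: "t2 \<in> Cset A D"
    and e: "map t1 [1..<Suc n] = map t2 [1..<Suc n]"
  have p1: "t1 permutes {1..n}" by (rule Cset_sub[OF t1 assms])
  have p2: "t2 permutes {1..n}" by (rule Cset_sub[OF t2 assms])
  show "t1 = t2"
  proof
    fix x show "t1 x = t2 x"
    proof (cases "x \<in> {1..n}")
      case True then show ?thesis using e by (simp add: map_eq_conv)
    next
      case False then show ?thesis using p1 p2 by (simp add: permutes_not_in)
    qed
  qed
qed


declare upt_Suc[simp del]

lemma prod_lessThan_fact:
  assumes "k \<le> n"
  shows "(\<Prod>j<k. (n - j)) * fact (n - k) = (fact n :: nat)"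
proof -
  have "(\<Prod>j<k. (n - j)) = \<Prod>{n - k + 1..n}"
    by (rule prod.reindex_bij_witness[where i = "\<lambda>x. n - x" and j = "\<lambda>x. n - x"]) (use assms in auto)
  then show ?thesis using prod_fact_split[OF assms] by simp
qed

lemma prod_K_fact: "(\<Prod>j\<in>{Suc k..n}. (n + 1 - j)) = (fact (n - k) :: nat)"
proof -
  have "(\<Prod>j\<in>{Suc k..n}. (n + 1 - j)) = \<Prod>{1..n - k}"
    by (rule prod.reindex_bij_witness[where i = "\<lambda>x. n + 1 - x" and j = "\<lambda>x. n + 1 - x"]) auto
  then show ?thesis by (simp add: fact_prod)
qed

lemma take_map_upt:
  assumes "j < n"
  shows "set (take j (map \<tau> [1..<Suc n])) = \<tau> ` {1..j}"
proof -
  have "take j [1..<Suc n] = [1..<1 + j]" using assms by (intro take_upt) simp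
  then have "set (take j (map \<tau> [1..<Suc n])) = \<tau> ` {1..<1 + j}" by (simp add: take_map)
  also have "{1..<1 + j} = {1..j}" by auto
  finally show ?thesis .
qed

lemma wt_map:
  assumes t: "\<tau> \<in> Cset A D" and A: "A \<subseteq> {1..k}" and D: "D \<subseteq> {Suc k..n}" and kn: "k \<le> n"
  shows "wt n k n (map \<tau> [1..<Suc n]) = (\<Prod>j\<in>{Suc k..n} - D. real (n + 1 - j)) / fact n"
proof -
  let ?xs = "map \<tau> [1..<Suc n]"
  have tp: "\<tau> permutes A \<union> D" and cond: "\<forall>z\<in>A \<union> D. \<tau> z \<in> D \<longrightarrow> z < \<tau> z"
    using t unfolding Cset_def by auto
  have tn: "\<tau> permutes {1..n}" by (rule Cset_sub[OF t A D kn])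
  have fx: "\<tau> j = j" if "j \<notin> A \<union> D" for j using tp that by (simp add: permutes_not_in)
  have key: "Suc j \<in> set (take j ?xs) \<longleftrightarrow> Suc j \<in> D" if j: "j < n" "k \<le> j" for j
  proof
    assume "Suc j \<in> set (take j ?xs)"
    then have "Suc j \<in> \<tau> ` {1..j}" by (simp only: take_map_upt[OF j(1)])
    then obtain i where i: "Suc j = \<tau> i" "i \<in> {1..j}" by (rule imageE)
    show "Suc j \<in> D"
    proof (rule ccontr)
      assume "Suc j \<notin> D"
      moreover have "Suc j \<notin> A" using A j by auto
      ultimately have "\<tau> (Suc j) = Suc j" using fx by auto
      then have "\<tau> (Suc j) = \<tau> i" using i by simp
      moreover have "Suc j \<in> {1..n}" "i \<in> {1..n}" using i j by auto
      ultimately have "Suc j = i" using permutes_inj_on[OF tn] by (auto dest: inj_onD)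
      then show False using i by simp
    qed
  next
    assume sjD: "Suc j \<in> D"
    then have "Suc j \<in> A \<union> D" by simp
    then have "Suc j \<in> \<tau> ` (A \<union> D)" by (simp only: permutes_image[OF tp])
    then obtain z where z': "Suc j = \<tau> z" "z \<in> A \<union> D" by (rule imageE)
    then have "z < Suc j" using cond[rule_format, OF z'(2)] sjD by simp
    moreover have "z \<ge> 1" using z' A D by auto
    ultimately have "z \<in> {1..j}" by simp
    then have "Suc j \<in> \<tau> ` {1..j}" using z'(1) by (intro rev_image_eqI[of z]) auto
    then show "Suc j \<in> set (take j ?xs)" by (simp only: take_map_upt[OF j(1)])
  qed
  have J: "{j. j < n \<and> (j < k \<or> Suc j \<in> set (take j ?xs))} = {..<k} \<union> (\<lambda>d. d - 1) ` D"
  proof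
    show "{j. j < n \<and> (j < k \<or> Suc j \<in> set (take j ?xs))} \<subseteq> {..<k} \<union> (\<lambda>d. d - 1) ` D"
    proof
      fix j assume "j \<in> {j. j < n \<and> (j < k \<or> Suc j \<in> set (take j ?xs))}"
      then have j: "j < n" "j < k \<or> Suc j \<in> set (take j ?xs)" by auto
      show "j \<in> {..<k} \<union> (\<lambda>d. d - 1) ` D"
      proof (cases "j < k")
        case True then show ?thesis by simp
      next
        case False
        then have "Suc j \<in> D" using j key by auto
        then have "Suc j - 1 \<in> (\<lambda>d. d - 1) ` D" by (rule imageI)
        then show ?thesis by simp
      qed
    qed
    show "{..<k} \<union> (\<lambda>d. d - 1) ` D \<subseteq> {j. j < n \<and> (j < k \<or> Suc j \<in> set (take j ?xs))}"
    proof
      fix j assume "j \<in> {..<k} \<union> (\<lambda>d. d - 1) ` D"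
      then show "j \<in> {j. j < n \<and> (j < k \<or> Suc j \<in> set (take j ?xs))}"
      proof
        assume "j \<in> {..<k}" then show ?thesis using kn by auto
      next
        assume "j \<in> (\<lambda>d. d - 1) ` D"
        then obtain d where d: "j = d - 1" "d \<in> D" by auto
        then have dd: "d \<in> {Suc k..n}" using D by auto
        then have jj: "Suc j = d" "j < n" "k \<le> j" using d by auto
        then have "Suc j \<in> set (take j ?xs)" using key[OF jj(2,3)] d(2) by simp
        then show ?thesis using jj by simp
      qed
    qed
  qed
  have fD: "finite D" using D by (rule finite_subset) simp
  have injD: "inj_on (\<lambda>d. d - 1) D"
  proof (rule inj_onI)
    fix x y assume "x \<in> D" "y \<in> D" "x - 1 = y - 1"
    moreover have "x \<ge> 1" "y \<ge> 1" using \<open>x \<in> D\<close> \<open>y \<in> D\<close> D by auto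
    ultimately show "x = y" by arith
  qed
  have "d - 1 \<ge> k" if "d \<in> D" for d using that D by (auto simp: subset_iff)
  then have disj: "{..<k} \<inter> (\<lambda>d. d - 1) ` D = {}" by force
  have "wt n k n ?xs = (\<Prod>j<k. 1 / real (n - j)) * (\<Prod>j\<in>(\<lambda>d. d - 1) ` D. 1 / real (n - j))"
    unfolding wt_def J by (rule prod.union_disjoint) (use fD disj in auto)
  also have "(\<Prod>j\<in>(\<lambda>d. d - 1) ` D. 1 / real (n - j)) = (\<Prod>d\<in>D. 1 / real (n + 1 - d))"
  proof -
    have "(\<Prod>j\<in>(\<lambda>d. d - 1) ` D. 1 / real (n - j)) = (\<Prod>d\<in>D. 1 / real (n - (d - 1)))"
      using prod.reindex[OF injD, of "\<lambda>j. 1 / real (n - j)"] by (simp add: comp_def)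
    also have "\<dots> = (\<Prod>d\<in>D. 1 / real (n + 1 - d))"
      by (rule prod.cong[OF refl]) (use D in auto)
    finally show ?thesis .
  qed
  finally have w: "wt n k n ?xs = 1 / ((\<Prod>j<k. real (n - j)) * (\<Prod>d\<in>D. real (n + 1 - d)))"
    by (simp add: prod_dividef)
  define P1 where "P1 = (\<Prod>j<k. real (n - j))"
  define P2 where "P2 = (\<Prod>d\<in>D. real (n + 1 - d))"
  define P3 where "P3 = (\<Prod>j\<in>{Suc k..n} - D. real (n + 1 - j))"
  have "(\<Prod>j\<in>{Suc k..n}. real (n + 1 - j)) = P3 * P2"
    unfolding P2_def P3_def by (rule prod.subset_diff[OF D finite_atLeastAtMost])
  then have "P2 * P3 = (\<Prod>j\<in>{Suc k..n}. real (n + 1 - j))" by (metis mult.commute)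
  also have "\<dots> = real (\<Prod>j\<in>{Suc k..n}. (n + 1 - j))" by (simp only: of_nat_prod)
  also have "\<dots> = real (fact (n - k))" by (simp only: prod_K_fact)
  finally have e23: "P2 * P3 = real (fact (n - k))" .
  have "real ((\<Prod>j<k. (n - j)) * fact (n - k)) = real (fact n)" by (simp only: prod_lessThan_fact[OF kn])
  then have e1: "P1 * real (fact (n - k)) = fact n"
    unfolding P1_def by (simp only: of_nat_mult of_nat_prod of_nat_fact)
  have P1pos: "P1 > 0" unfolding P1_def using kn by (intro prod_pos) auto
  have P2pos: "P2 > 0" unfolding P2_def using D by (intro prod_pos) auto
  have "P3 / fact n = P3 / (P1 * (P2 * P3))" using e1 e23 by simp
  also have "\<dots> = 1 / (P1 * P2)"
  proof -
    have P3pos: "P3 > 0" unfolding P3_def by (intro prod_pos) auto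
    then show ?thesis using P1pos P2pos by (simp add: field_simps)
  qed
  finally show ?thesis using w unfolding P1_def P2_def P3_def by simp
qed


lemma esym_insert:
  fixes w :: "nat \<Rightarrow> nat"
  assumes fK: "finite K" and aK: "a \<notin> K"
  shows "(\<Sum>D\<in>{D. D \<subseteq> insert a K \<and> card D = q}. \<Prod>j\<in>insert a K - D. w j) =
    w a * (\<Sum>D\<in>{D. D \<subseteq> K \<and> card D = q}. \<Prod>j\<in>K - D. w j) +
    (if q = 0 then 0 else (\<Sum>D\<in>{D. D \<subseteq> K \<and> card D = q - 1}. \<Prod>j\<in>K - D. w j))"
proof -
  let ?S = "{D. D \<subseteq> insert a K \<and> card D = q}"
  let ?S1 = "{D. D \<subseteq> K \<and> card D = q}"
  let ?S2 = "{D. D \<subseteq> insert a K \<and> card D = q \<and> a \<in> D}"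
  have fPow: "finite {D. D \<subseteq> insert a K}" using fK by simp
  have fS1: "finite ?S1" by (rule finite_subset[OF _ fPow]) auto
  have fS2: "finite ?S2" by (rule finite_subset[OF _ fPow]) auto
  have Seq: "?S = ?S1 \<union> ?S2" by auto
  have dj: "?S1 \<inter> ?S2 = {}" using aK by auto
  have s1: "(\<Sum>D\<in>?S1. \<Prod>j\<in>insert a K - D. w j) = w a * (\<Sum>D\<in>?S1. \<Prod>j\<in>K - D. w j)"
    unfolding sum_distrib_left
  proof (rule sum.cong[OF refl])
    fix D assume D: "D \<in> ?S1"
    then have "insert a K - D = insert a (K - D)" using aK by auto
    then show "(\<Prod>j\<in>insert a K - D. w j) = w a * (\<Prod>j\<in>K - D. w j)" using fK aK by simp
  qed
  have s2: "(\<Sum>D\<in>?S2. \<Prod>j\<in>insert a K - D. w j) =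
      (if q = 0 then 0 else (\<Sum>D\<in>{D. D \<subseteq> K \<and> card D = q - 1}. \<Prod>j\<in>K - D. w j))"
  proof (cases "q = 0")
    case True
    have e: "?S2 = {}"
    proof (rule ccontr)
      assume "?S2 \<noteq> {}"
      then obtain D where D: "D \<subseteq> insert a K" "card D = q" "a \<in> D" by auto
      have "finite D" using D(1) fK finite_subset by auto
      then show False using D True by auto
    qed
    show ?thesis by (subst e) (simp add: True)
  next
    case False
    let ?T = "{D. D \<subseteq> K \<and> card D = q - 1}"
    have img: "?S2 = insert a ` ?T"
    proof
      show "?S2 \<subseteq> insert a ` ?T"
      proof
        fix D assume D: "D \<in> ?S2"
        have fD: "finite D" using D fK finite_subset by auto
        have "D - {a} \<in> ?T" using D fD aK by (auto simp: card_Diff_singleton)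
        moreover have "D = insert a (D - {a})" using D by auto
        ultimately show "D \<in> insert a ` ?T" by blast
      qed
      show "insert a ` ?T \<subseteq> ?S2"
      proof
        fix D assume "D \<in> insert a ` ?T"
        then obtain D' where D': "D = insert a D'" "D' \<subseteq> K" "card D' = q - 1" by auto
        have "finite D'" using D' fK finite_subset by auto
        moreover have "a \<notin> D'" using D' aK by auto
        ultimately have "card D = Suc (q - 1)" using D' by simp
        then have "card D = q" using False by simp
        then show "D \<in> ?S2" using D' by auto
      qed
    qed
    have inj: "inj_on (insert a) ?T"
    proof (rule inj_onI)
      fix X Y assume "X \<in> ?T" "Y \<in> ?T" "insert a X = insert a Y"
      then show "X = Y" using aK by (metis (no_types, lifting) mem_Collect_eq insert_ident subsetD)
    qed
    have "(\<Sum>D\<in>?S2. \<Prod>j\<in>insert a K - D. w j) = (\<Sum>D\<in>?T. \<Prod>j\<in>insert a K - insert a D. w j)"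
      unfolding img using sum.reindex[OF inj, of "\<lambda>D. \<Prod>j\<in>insert a K - D. w j"] by (simp only: comp_def)
    also have "\<dots> = (\<Sum>D\<in>?T. \<Prod>j\<in>K - D. w j)"
      by (rule sum.cong[OF refl]) (use aK in \<open>auto intro!: prod.cong\<close>)
    finally show ?thesis using False by simp
  qed
  show ?thesis unfolding Seq sum.union_disjoint[OF fS1 fS2 dj] s1 s2 ..
qed

lemma esym_stirling:
  "n - k = N \<Longrightarrow> k \<le> n \<Longrightarrow>
   (\<Sum>D\<in>{D. D \<subseteq> {Suc k..n} \<and> card D = q}. \<Prod>j\<in>{Suc k..n} - D. (n + 1 - j)) = stirling (n - k + 1) (q + 1)"
proof (induction N arbitrary: k q)
  case 0
  then have kn: "k = n" by simp
  have "{D. D \<subseteq> {Suc k..n} \<and> card D = q} = (if q = 0 then {{}} else {})" using kn by auto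
  then show ?case using kn by (cases q) auto
next
  case (Suc N)
  then have kn: "k < n" by simp
  have K: "{Suc k..n} = insert (Suc k) {Suc (Suc k)..n}" using kn by auto
  have nin: "Suc k \<notin> {Suc (Suc k)..n}" by simp
  have IH: "(\<Sum>D\<in>{D. D \<subseteq> {Suc (Suc k)..n} \<and> card D = q'}. \<Prod>j\<in>{Suc (Suc k)..n} - D. (n + 1 - j)) =
      stirling (n - k) (q' + 1)" for q'
    using Suc.IH[of "Suc k" q'] Suc.prems kn by simp
  have "(\<Sum>D\<in>{D. D \<subseteq> {Suc k..n} \<and> card D = q}. \<Prod>j\<in>{Suc k..n} - D. (n + 1 - j)) =
      (n - k) * stirling (n - k) (q + 1) + (if q = 0 then 0 else stirling (n - k) q)"
    unfolding K using esym_insert[OF finite_atLeastAtMost nin, of "\<lambda>j. n + 1 - j" q] IH[of q] IH[of "q - 1"]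
    by simp
  also have "\<dots> = stirling (n - k + 1) (q + 1)"
  proof -
    obtain m where m: "n - k = Suc m" using kn by (cases "n - k") auto
    show ?thesis unfolding m by (cases q) auto
  qed
  finally show ?case .
qed

lemma sum_subsets_card:
  fixes \<phi> :: "nat \<Rightarrow> real"
  assumes fX: "finite X"
  shows "(\<Sum>A\<in>Pow X. \<phi> (card A)) = (\<Sum>s\<le>card X. real (card X choose s) * \<phi> s)"
proof -
  have sub: "card ` Pow X \<subseteq> {..card X}" using fX by (auto intro: card_mono)
  have "(\<Sum>A\<in>Pow X. \<phi> (card A)) = (\<Sum>s\<le>card X. \<Sum>A\<in>{A\<in>Pow X. card A = s}. \<phi> (card A))"
    by (rule sum.group[symmetric, OF _ finite_atMost sub]) (use fX in simp)
  also have "\<dots> = (\<Sum>s\<le>card X. real (card X choose s) * \<phi> s)"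
  proof (rule sum.cong[OF refl])
    fix s
    have "{A\<in>Pow X. card A = s} = {A. A \<subseteq> X \<and> card A = s}" by auto
    then have "card {A\<in>Pow X. card A = s} = card X choose s" using n_subsets[OF fX] by simp
    then show "(\<Sum>A\<in>{A\<in>Pow X. card A = s}. \<phi> (card A)) = real (card X choose s) * \<phi> s"
      by simp
  qed
  finally show ?thesis .
qed


lemma finite_vl: "finite {xs. vl n k n xs \<and> P xs}"
proof (rule finite_subset)
  show "{xs. vl n k n xs \<and> P xs} \<subseteq> {xs. set xs \<subseteq> {1..n} \<and> length xs = n}" unfolding vl_def by auto
  show "finite {xs. set xs \<subseteq> {1..n} \<and> length xs = n}" by (rule finite_lists_length_eq) simp
qed

lemma inner_sum:
  fixes n k m s :: nat
  assumes kn: "k \<le> n"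
  shows "(\<Sum>t=0..s. (fact t)^2 * real (stirling2_int (int m - int s) (int t))
          * real (stirling1_int (int n - int k + 1) (int m - int s + 1))
          * (\<Sum>r=t..s. real (s choose r) * real (lah r t) * real (derangements_num (s - r)))) =
     (if s \<le> m then real_of_int (fC s (m - s)) * real (stirling (n - k + 1) (m - s + 1)) else 0)"
proof (cases "s \<le> m")
  case True
  have s2: "stirling2_int (int m - int s) (int t) = Stirling (m - s) t" for t
  proof -
    have "int m - int s = int (m - s)" by (rule of_nat_diff[OF True, symmetric])
    note e = this
    show ?thesis unfolding stirling2_int_def e by simp
  qed
  have s1: "stirling1_int (int n - int k + 1) (int m - int s + 1) = stirling (n - k + 1) (m - s + 1)"
  proof -
    have e1: "int n - int k + 1 = int (n - k + 1)" using kn by simp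
    have e2: "int m - int s + 1 = int (m - s + 1)" using True by simp
    show ?thesis unfolding stirling1_int_def e1 e2 nat_int by simp
  qed
  define G where "G = (\<lambda>t. (\<Sum>r=t..s. real (s choose r) * real (lah r t) * real (derangements_num (s - r))))"
  have kid: "real_of_int (fC s (m - s)) = (\<Sum>t=0..s. (fact t)^2 * real (Stirling (m - s) t) * G t)"
    unfolding key_identity[of s "m - s"] G_def
    by (simp only: of_int_sum of_int_mult of_int_power of_int_fact of_int_of_nat_eq)
  have "(\<Sum>t=0..s. (fact t)^2 * real (stirling2_int (int m - int s) (int t))
          * real (stirling1_int (int n - int k + 1) (int m - int s + 1)) * G t) =
      (\<Sum>t=0..s. (fact t)^2 * real (Stirling (m - s) t) * G t) * real (stirling (n - k + 1) (m - s + 1))"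
    unfolding s1 s2 sum_distrib_right by (rule sum.cong[OF refl]) (simp only: ac_simps)
  then show ?thesis using True unfolding kid G_def by simp
next
  case False
  have "stirling2_int (int m - int s) (int t) = 0" for t
    unfolding stirling2_int_def using False by simp
  then show ?thesis using False by simp
qed

theorem theorem2:
  fixes n k m :: nat
  assumes "0 < k" and "k \<le> n"
  shows "measure_pmf.prob (seating n k n) {xs. misseated n xs = m} =
    (1 / fact n) * (\<Sum>s=0..k. real (k choose s) *
       (\<Sum>t=0..s. (fact t)^2 * real (stirling2_int (int m - int s) (int t))
          * real (stirling1_int (int n - int k + 1) (int m - int s + 1))
          * (\<Sum>r=t..s. real (s choose r) * real (lah r t) * real (derangements_num (s - r)))))"
proof -
  note kn = \<open>k \<le> n\<close>
  define B where "B = {xs. vl n k n xs \<and> misseated n xs = m}"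
  define K where "K = {Suc k..n}"
  define T where "T = Sigma (Pow {1..k}) (\<lambda>A. {D. D \<subseteq> K \<and> card D = m - card A \<and> card A \<le> m})"
  define W where "W = (\<lambda>D. (\<Prod>j\<in>K - D. real (n + 1 - j)) / fact n)"
  define h where "h = (\<lambda>xs. (Aof k xs, Dof n k xs))"
  have fB: "finite B" unfolding B_def by (rule finite_vl)
  have fT: "finite T" unfolding T_def K_def
    by (rule finite_SigmaI) (auto intro: finite_subset[OF _ finite_Pow_iff[THEN iffD2, OF finite_atLeastAtMost[of "Suc k" n]]])
  have hB: "h ` B \<subseteq> T"
  proof
    fix p assume "p \<in> h ` B"
    then obtain xs where xs: "xs \<in> B" "p = h xs" by auto
    have "card (Aof k xs) + card (Dof n k xs) = m"
      using xs misseated_AD[OF kn, of xs] unfolding B_def by simp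
    then show "p \<in> T" unfolding xs h_def T_def K_def Aof_def Dof_def by auto
  qed
  have "measure_pmf.prob (seating n k n) {xs. misseated n xs = m} = (\<Sum>xs\<in>B. wt n k n xs)"
    unfolding B_def by (rule prob_seating)
  also have "\<dots> = (\<Sum>p\<in>T. \<Sum>xs\<in>{xs\<in>B. h xs = p}. wt n k n xs)"
    by (rule sum.group[symmetric, OF fB fT hB])
  also have "\<dots> = (\<Sum>p\<in>T. real_of_int (fC (card (fst p)) (card (snd p))) * W (snd p))"
  proof (rule sum.cong[OF refl])
    fix p assume pT: "p \<in> T"
    obtain A D where p: "p = (A, D)" by (cases p)
    have A: "A \<subseteq> {1..k}" and D: "D \<subseteq> {Suc k..n}" and cm: "card A + card D = m"
      using pT unfolding p T_def K_def by auto
    have eq: "{xs\<in>B. h xs = p} = (\<lambda>\<tau>. map \<tau> [1..<Suc n]) ` Cset A D"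
    proof
      show "{xs\<in>B. h xs = p} \<subseteq> (\<lambda>\<tau>. map \<tau> [1..<Suc n]) ` Cset A D"
      proof
        fix xs assume "xs \<in> {xs\<in>B. h xs = p}"
        then have v: "vl n k n xs" and hx: "Aof k xs = A" "Dof n k xs = D"
          unfolding B_def h_def p by auto
        from B_in_map[OF v kn] show "xs \<in> (\<lambda>\<tau>. map \<tau> [1..<Suc n]) ` Cset A D"
          unfolding hx by auto
      qed
      show "(\<lambda>\<tau>. map \<tau> [1..<Suc n]) ` Cset A D \<subseteq> {xs\<in>B. h xs = p}"
      proof
        fix xs assume "xs \<in> (\<lambda>\<tau>. map \<tau> [1..<Suc n]) ` Cset A D"
        then obtain \<tau> where t: "\<tau> \<in> Cset A D" and xs: "xs = map \<tau> [1..<Suc n]" by auto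
        have r: "vl n k n xs \<and> Aof k xs = A \<and> Dof n k xs = D"
          unfolding xs by (rule map_in_B[OF t A D kn])
        then have "misseated n xs = m" using misseated_AD[OF kn, of xs] cm by simp
        then show "xs \<in> {xs\<in>B. h xs = p}" using r unfolding B_def h_def p by simp
      qed
    qed
    have "(\<Sum>xs\<in>{xs\<in>B. h xs = p}. wt n k n xs) = (\<Sum>\<tau>\<in>Cset A D. wt n k n (map \<tau> [1..<Suc n]))"
      unfolding eq by (rule sum.reindex[OF inj_map_Cset[OF A D kn], unfolded comp_def])
    also have "\<dots> = (\<Sum>\<tau>\<in>Cset A D. W D)"
    proof (rule sum.cong[OF refl])
      fix \<tau> assume "\<tau> \<in> Cset A D"
      then show "wt n k n (map \<tau> [1..<Suc n]) = W D"
        unfolding W_def K_def by (rule wt_map[OF _ A D kn])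
    qed
    also have "\<dots> = real (card (Cset A D)) * W D" by simp
    also have "real (card (Cset A D)) = real_of_int (fC (card A) (card D))"
    proof -
      have fA: "finite A" using A finite_subset by blast
      have fD: "finite D" using D finite_subset by blast
      have "int (card (Cset A D)) = fC (card A) (card D)"
        by (rule Cset_card[OF fA fD]) (use A D in force)+
      then show ?thesis by (metis of_int_of_nat_eq)
    qed
    finally show "(\<Sum>xs\<in>{xs\<in>B. h xs = p}. wt n k n xs) = real_of_int (fC (card (fst p)) (card (snd p))) * W (snd p)"
      unfolding p by simp
  qed
  also have "\<dots> = (\<Sum>(A, D)\<in>T. real_of_int (fC (card A) (card D)) * W D)"
    by (simp add: case_prod_unfold)
  also have "\<dots> = (\<Sum>A\<in>Pow {1..k}. \<Sum>D\<in>{D. D \<subseteq> K \<and> card D = m - card A \<and> card A \<le> m}.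
      real_of_int (fC (card A) (card D)) * W D)"
    unfolding T_def by (rule sum.Sigma[symmetric]) (auto simp: K_def intro: finite_subset)
  also have "\<dots> = (\<Sum>A\<in>Pow {1..k}. (\<lambda>s. if s \<le> m then real_of_int (fC s (m - s)) * real (stirling (n - k + 1) (m - s + 1)) / fact n else 0) (card A))"
  proof (rule sum.cong[OF refl])
    fix A assume "A \<in> Pow {1..k}"
    show "(\<Sum>D\<in>{D. D \<subseteq> K \<and> card D = m - card A \<and> card A \<le> m}. real_of_int (fC (card A) (card D)) * W D) =
      (\<lambda>s. if s \<le> m then real_of_int (fC s (m - s)) * real (stirling (n - k + 1) (m - s + 1)) / fact n else 0) (card A)"
    proof (cases "card A \<le> m")
      case True
      have "(\<Sum>D\<in>{D. D \<subseteq> K \<and> card D = m - card A \<and> card A \<le> m}. real_of_int (fC (card A) (card D)) * W D) =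
          (\<Sum>D\<in>{D. D \<subseteq> K \<and> card D = m - card A}. real_of_int (fC (card A) (m - card A)) * W D)"
        using True by (intro sum.cong) auto
      also have "\<dots> = real_of_int (fC (card A) (m - card A)) / fact n *
          real (\<Sum>D\<in>{D. D \<subseteq> K \<and> card D = m - card A}. \<Prod>j\<in>K - D. (n + 1 - j))"
        unfolding W_def by (simp add: sum_distrib_left)
      also have "(\<Sum>D\<in>{D. D \<subseteq> K \<and> card D = m - card A}. \<Prod>j\<in>K - D. (n + 1 - j)) =
          stirling (n - k + 1) (m - card A + 1)"
        unfolding K_def by (rule esym_stirling[OF refl kn])
      finally show ?thesis using True by simp
    next
      case False
      then show ?thesis by simp
    qed
  qed
  also have "\<dots> = (\<Sum>s\<le>k. real (k choose s) *
      (if s \<le> m then real_of_int (fC s (m - s)) * real (stirling (n - k + 1) (m - s + 1)) / fact n else 0))"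
    using sum_subsets_card[of "{1..k}"] by simp
  also have "\<dots> = (1 / fact n) * (\<Sum>s=0..k. real (k choose s) *
       (\<Sum>t=0..s. (fact t)^2 * real (stirling2_int (int m - int s) (int t))
          * real (stirling1_int (int n - int k + 1) (int m - int s + 1))
          * (\<Sum>r=t..s. real (s choose r) * real (lah r t) * real (derangements_num (s - r)))))"
    (is "_ = ?R")
  proof -
    have "(\<Sum>s\<le>k. real (k choose s) *
      (if s \<le> m then real_of_int (fC s (m - s)) * real (stirling (n - k + 1) (m - s + 1)) / fact n else 0)) =
      (1 / fact n) * (\<Sum>s=0..k. real (k choose s) *
      (if s \<le> m then real_of_int (fC s (m - s)) * real (stirling (n - k + 1) (m - s + 1)) else 0))"
      unfolding sum_distrib_left atLeast0AtMost by (rule sum.cong[OF refl]) simp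
    also have "\<dots> = ?R" by (simp only: inner_sum[OF kn])
    finally show ?thesis .
  qed
  finally show ?thesis .
qed


end
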